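(* Let $F:\mathbb{R}^{n_0}\to\mathbb{R}$ be a generic, supertransversal fully-connected ReLU network with at least $n_0$ hidden units in the first layer, and let $\mathcal{S}(F)=\{Q_{s(C)}:C\in\mathcal{C}(F)\}$ be its sign sequence cubical complex. Then the map $C\mapsto Q_{s(C)}$ is an isomorphism from the face poset of $\mathcal{C}(F)$ to the opposite of the face poset of $\mathcal{S}(F)$, and the mod-two cellular boundary map of $\mathcal{S}(F)$ is dual (transpose) to the mod-two cellular boundary map of $\mathcal{C}(F)$: a cell $C$ is a codimension-one face of a cell $D$ in $\mathcal{C}(F)$ if and only if $s(D)$ is obtained from $s(C)$ by replacing exactly one zero entry with $1$ or $-1$, i.e. iff $Q_{s(D)}$ is a codimension-one face of $Q_{s(C)}$.
   Context: A ReLU network of architecture $(n_0,\dots,n_m,1)$: affine maps $A_i:\mathbb{R}^{n_{i-1}}\to\mathbb{R}^{n_i}$, $1\le i\le m+1$, $n_{m+1}=1$; $F_i=\mathrm{ReLU}\circ A_i$ ($i\le m$), $G=A_{m+1}$, $F=G\circ F_m\circ\cdots\circ F_1$, $F_{(k)}=F_k\circ\cdots\circ F_1$ ($F_{(0)}=\mathrm{id}$), $F^{(k)}=G\circ F_m\circ\cdots\circ F_k$ ($F^{(m+1)}=G$). Node maps $F_{ij}=\pi_j\circ A_i\circ F_{(i-1)}$, $1\le i\le m+1$, $1\le j\le n_i$; $N=n_1+\dots+n_m+1$. Polyhedra are finite intersections of closed half-spaces; $C^\circ$ is the relative interior. $R^{(i)}$ is the polyhedral complex on $\mathbb{R}^{n_{i-1}}$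 induced by the hyperplanes $H_{ij}=\{\pi_jA_i=0\}$ (cells: nonempty intersections of one choice among $\{\pi_jA_i\ge0\},\{\pi_jA_i\le0\},\{\pi_jA_i=0\}$ for each $j$). Canonical polyhedral complex: $\mathcal{C}(F_{(1)})=R^{(1)}$, $\mathcal{C}(F_{(k)})=\{C\cap F_{(k-1)}^{-1}(R)\neq\emptyset: C\in\mathcal{C}(F_{(k-1)}),R\in R^{(k)}\}$, $2\le k\le m+1$; $\mathcal{C}(F)$ is the last; likewise $\mathcal{C}(F^{(k)})$ on $\mathbb{R}^{n_{k-1}}$, $\mathcal{C}(F^{(m+1)})=R^{(m+1)}$. Sign sequence: $s(C)\in\{-1,0,1\}^N$, $s_{ij}(C)=\mathrm{sgn}(F_{ij}(x))$, $x\in C^\circ$. For $\sigma\in\{-1,0,1\}^N$, $Q_\sigma=\{x\in[-1,1]^N:x_l=\sigma_l\text{ whenever }\sigma_l\ne0\}$ is the corresponding closed face of the cube $[-1,1]^N$ (product CW structure), of dimension the number of zeros of $\sigma$; $\mathcal{S}(F)$ is a subcomplex of this cube. Generic: for every $i$, any $k$ of the hyperplanes $H_{i1},\dots,H_{in_i}$ meet in an affine subspace of dimension $n_{i-1}-k$ (empty if $k>n_{i-1}$). Supertransversal: for every $1\le i\le m$, the restriction of $F_i$ to the relative interior of each cell of $R^{(i)}$ is transverse to the relative interior of every cell of $\mathcal{C}(F^{(i+1)})$. *)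

theory Defs
  imports "HOL-Analysis.Analysis" "HOL-Library.Function_Algebras"
begin

text \<open>R^n is represented by functions nat => real vanishing outside the
  coordinates 0..n-1 (the set vec n).  We give functions the pointwise
  real vector space structure; together with the product topology from
  HOL-Analysis this makes span, dim, affine hull and rel_interior available.\<close>

instantiation "fun" :: (type, real_vector) real_vector
begin
definition scaleR_fun :: "real \<Rightarrow> ('a \<Rightarrow> 'b) \<Rightarrow> 'a \<Rightarrow> 'b" where
  "scaleR_fun c f = (\<lambda>x. c *\<^sub>R f x)"
instance
  by standard (auto simp: scaleR_fun_def fun_eq_iff scaleR_add_right scaleR_add_left)
end

definition vec :: "nat \<Rightarrow> (nat \<Rightarrow> real) set" where
  "vec n = {x. \<forall>j\<ge>n. x j = 0}"

definition adim :: "('a::real_vector) set \<Rightarrow> nat" where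
  "adim S = dim {x - y | x y. x \<in> S \<and> y \<in> S}"

text \<open>A network of architecture (d 0, ..., d m, 1) is given by weights W i j k
  (layer i, output j < d i, input k < d (i-1)) and biases b i j, for
  1 <= i <= m+1.  A_i is aff W b d i.\<close>

definition aff :: "(nat \<Rightarrow> nat \<Rightarrow> nat \<Rightarrow> real) \<Rightarrow> (nat \<Rightarrow> nat \<Rightarrow> real) \<Rightarrow> (nat \<Rightarrow> nat)
    \<Rightarrow> nat \<Rightarrow> (nat \<Rightarrow> real) \<Rightarrow> (nat \<Rightarrow> real)" where
  "aff W b d i y = (\<lambda>j. if j < d i then b i j + (\<Sum>k<d (i - 1). W i j k * y k) else 0)"

definition layer :: "(nat \<Rightarrow> nat \<Rightarrow> nat \<Rightarrow> real) \<Rightarrow> (nat \<Rightarrow> nat \<Rightarrow> real) \<Rightarrow> (nat \<Rightarrow> nat)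
    \<Rightarrow> nat \<Rightarrow> (nat \<Rightarrow> real) \<Rightarrow> (nat \<Rightarrow> real)" where
  "layer W b d i y = (\<lambda>j. max 0 (aff W b d i y j))"

text \<open>comp W b d a j = F_{a+j-1} o ... o F_a  (identity for j = 0).
  In particular comp W b d 1 k = F_(k).\<close>
fun comp :: "(nat \<Rightarrow> nat \<Rightarrow> nat \<Rightarrow> real) \<Rightarrow> (nat \<Rightarrow> nat \<Rightarrow> real) \<Rightarrow> (nat \<Rightarrow> nat)
    \<Rightarrow> nat \<Rightarrow> nat \<Rightarrow> (nat \<Rightarrow> real) \<Rightarrow> (nat \<Rightarrow> real)" where
  "comp W b d a 0 y = y"
| "comp W b d a (Suc j) y = layer W b d (a + j) (comp W b d a j y)"

definition hyp :: "(nat \<Rightarrow> nat \<Rightarrow> nat \<Rightarrow> real) \<Rightarrow> (nat \<Rightarrow> nat \<Rightarrow> real) \<Rightarrow> (nat \<Rightarrow> nat)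
    \<Rightarrow> nat \<Rightarrow> nat \<Rightarrow> (nat \<Rightarrow> real) set" where
  "hyp W b d i j = {y \<in> vec (d (i - 1)). aff W b d i y j = 0}"

text \<open>The cells of the complex R^{(i)} on R^{n_{i-1}}: nonempty intersections of
  one choice among {>= 0}, {<= 0}, {= 0} for each j (choice encoded by
  c j = 1, -1, 0 respectively).\<close>
definition Rcx :: "(nat \<Rightarrow> nat \<Rightarrow> nat \<Rightarrow> real) \<Rightarrow> (nat \<Rightarrow> nat \<Rightarrow> real) \<Rightarrow> (nat \<Rightarrow> nat)
    \<Rightarrow> nat \<Rightarrow> (nat \<Rightarrow> real) set set" where
  "Rcx W b d i = {C. C \<noteq> {} \<and> (\<exists>c::nat \<Rightarrow> int. (\<forall>j<d i. c j \<in> {-1, 0, 1}) \<and>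
     C = {y \<in> vec (d (i - 1)). \<forall>j<d i.
            (c j = 1 \<longrightarrow> aff W b d i y j \<ge> 0) \<and>
            (c j = -1 \<longrightarrow> aff W b d i y j \<le> 0) \<and>
            (c j = 0 \<longrightarrow> aff W b d i y j = 0)})}"

text \<open>canon W b d a k: canonical polyhedral complex (on R^{n_{a-1}}) of the
  network consisting of the k layers a, ..., a+k-1; built by the recursion
  C(F_(k)) = {C \<inter> F_(k-1)^{-1}(R) nonempty : C in C(F_(k-1)), R in R^{(k)}},
  starting from the trivial complex {R^{n_{a-1}}} (so that canon a 1 = R^{(a)}).
  C(F) = canon 1 (m+1), C(F^{(k)}) = canon k (m+2-k).\<close>
fun canon :: "(nat \<Rightarrow> nat \<Rightarrow> nat \<Rightarrow> real) \<Rightarrow> (nat \<Rightarrow> nat \<Rightarrow> real) \<Rightarrow> (nat \<Rightarrow> nat)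
    \<Rightarrow> nat \<Rightarrow> nat \<Rightarrow> (nat \<Rightarrow> real) set set" where
  "canon W b d a 0 = {vec (d (a - 1))}"
| "canon W b d a (Suc k) =
     {E. E \<noteq> {} \<and> (\<exists>C \<in> canon W b d a k. \<exists>R \<in> Rcx W b d (a + k).
            E = C \<inter> {x \<in> vec (d (a - 1)). comp W b d a k x \<in> R})}"

definition node :: "(nat \<Rightarrow> nat \<Rightarrow> nat \<Rightarrow> real) \<Rightarrow> (nat \<Rightarrow> nat \<Rightarrow> real) \<Rightarrow> (nat \<Rightarrow> nat)
    \<Rightarrow> nat \<Rightarrow> nat \<Rightarrow> (nat \<Rightarrow> real) \<Rightarrow> real" where
  "node W b d i j x = aff W b d i (comp W b d 1 (i - 1) x) j"

definition nodes :: "(nat \<Rightarrow> nat) \<Rightarrow> nat \<Rightarrow> (nat \<times> nat) set" where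
  "nodes d m = {(i, j). 1 \<le> i \<and> i \<le> m + 1 \<and> j < d i}"

definition signseq :: "(nat \<Rightarrow> nat \<Rightarrow> nat \<Rightarrow> real) \<Rightarrow> (nat \<Rightarrow> nat \<Rightarrow> real) \<Rightarrow> (nat \<Rightarrow> nat)
    \<Rightarrow> nat \<Rightarrow> (nat \<Rightarrow> real) set \<Rightarrow> nat \<times> nat \<Rightarrow> real" where
  "signseq W b d m C = (\<lambda>(i, j). if (i, j) \<in> nodes d m
      then sgn (node W b d i j (SOME x. x \<in> rel_interior C)) else 0)"

definition cube_face :: "(nat \<times> nat) set \<Rightarrow> (nat \<times> nat \<Rightarrow> real) \<Rightarrow> (nat \<times> nat \<Rightarrow> real) set" where
  "cube_face I \<sigma> = {x. (\<forall>l\<in>I. -1 \<le> x l \<and> x l \<le> 1 \<and> (\<sigma> l \<noteq> 0 \<longrightarrow> x l = \<sigma> l))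
                       \<and> (\<forall>l. l \<notin> I \<longrightarrow> x l = 0)}"

definition cube_dim :: "(nat \<times> nat) set \<Rightarrow> (nat \<times> nat \<Rightarrow> real) \<Rightarrow> nat" where
  "cube_dim I \<sigma> = card {l \<in> I. \<sigma> l = 0}"

definition generic :: "(nat \<Rightarrow> nat \<Rightarrow> nat \<Rightarrow> real) \<Rightarrow> (nat \<Rightarrow> nat \<Rightarrow> real) \<Rightarrow> (nat \<Rightarrow> nat)
    \<Rightarrow> nat \<Rightarrow> bool" where
  "generic W b d m \<longleftrightarrow> (\<forall>i. 1 \<le> i \<and> i \<le> m + 1 \<longrightarrow> (\<forall>J \<subseteq> {..<d i}.
     (let S = vec (d (i - 1)) \<inter> (\<Inter>j\<in>J. hyp W b d i j) in
       (if card J \<le> d (i - 1) then S \<noteq> {} \<and> adim S = d (i - 1) - card J else S = {}))))"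

text \<open>Transversality of f restricted to rel_interior C (f affine on C) to the
  relatively open polyhedron rel_interior D in R^n: at every point x of
  rel_interior C mapped into rel_interior D, the image of the tangent space of C
  under the differential of f, i.e. span {f y - f x | y in C}, together with the
  tangent space of D spans R^n.\<close>
definition transverse_on :: "((nat \<Rightarrow> real) \<Rightarrow> (nat \<Rightarrow> real)) \<Rightarrow> (nat \<Rightarrow> real) set
    \<Rightarrow> (nat \<Rightarrow> real) set \<Rightarrow> nat \<Rightarrow> bool" where
  "transverse_on f C D n \<longleftrightarrow> (\<forall>x \<in> rel_interior C. f x \<in> rel_interior D \<longrightarrow>
     span ({f y - f x | y. y \<in> C} \<union> {z - w | z w. z \<in> D \<and> w \<in> D}) = vec n)"

definition supertransversal :: "(nat \<Rightarrow> nat \<Rightarrow> nat \<Rightarrow> real) \<Rightarrow> (nat \<Rightarrow> nat \<Rightarrow> real) \<Rightarrow> (nat \<Rightarrow> nat)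
    \<Rightarrow> nat \<Rightarrow> bool" where
  "supertransversal W b d m \<longleftrightarrow> (\<forall>i. 1 \<le> i \<and> i \<le> m \<longrightarrow>
     (\<forall>C \<in> Rcx W b d i. \<forall>D \<in> canon W b d (i + 1) (m + 1 - i).
        transverse_on (layer W b d i) C D (d i)))"

end

theory Submission
  imports Defs
begin
definition wk :: "int \<Rightarrow> real \<Rightarrow> bool" where
  "wk c v \<longleftrightarrow> (c = 1 \<longrightarrow> 0 \<le> v) \<and> (c = -1 \<longrightarrow> v \<le> 0) \<and> (c = 0 \<longrightarrow> v = 0)"

definition sgi :: "real \<Rightarrow> int" where
  "sgi v = (if 0 < v then 1 else if v < 0 then -1 else 0)"

definition llayer :: "(nat \<Rightarrow> nat \<Rightarrow> nat \<Rightarrow> real) \<Rightarrow> (nat \<Rightarrow> nat \<Rightarrow> real) \<Rightarrow> (nat \<Rightarrow> nat)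
    \<Rightarrow> (nat \<times> nat \<Rightarrow> int) \<Rightarrow> nat \<Rightarrow> (nat \<Rightarrow> real) \<Rightarrow> (nat \<Rightarrow> real)" where
  "llayer W b d c i y = (\<lambda>j. if c (i, j) = 1 then aff W b d i y j else 0)"

fun lcomp :: "(nat \<Rightarrow> nat \<Rightarrow> nat \<Rightarrow> real) \<Rightarrow> (nat \<Rightarrow> nat \<Rightarrow> real) \<Rightarrow> (nat \<Rightarrow> nat)
    \<Rightarrow> (nat \<times> nat \<Rightarrow> int) \<Rightarrow> nat \<Rightarrow> nat \<Rightarrow> (nat \<Rightarrow> real) \<Rightarrow> (nat \<Rightarrow> real)" where
  "lcomp W b d c a 0 y = y"
| "lcomp W b d c a (Suc k) y = llayer W b d c (a + k) (lcomp W b d c a k y)"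

definition okpat :: "(nat \<Rightarrow> nat) \<Rightarrow> nat \<Rightarrow> nat \<Rightarrow> (nat \<times> nat \<Rightarrow> int) \<Rightarrow> bool" where
  "okpat d a k c \<longleftrightarrow> (\<forall>k'<k. \<forall>j<d (a + k'). c (a + k', j) \<in> {-1, 0, 1})"

definition Pc :: "(nat \<Rightarrow> nat \<Rightarrow> nat \<Rightarrow> real) \<Rightarrow> (nat \<Rightarrow> nat \<Rightarrow> real) \<Rightarrow> (nat \<Rightarrow> nat)
    \<Rightarrow> (nat \<times> nat \<Rightarrow> int) \<Rightarrow> nat \<Rightarrow> nat \<Rightarrow> (nat \<Rightarrow> real) set" where
  "Pc W b d c a k = {y \<in> vec (d (a - 1)). \<forall>k'<k. \<forall>j<d (a + k').
      wk (c (a + k', j)) (aff W b d (a + k') (comp W b d a k' y) j)}"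

definition vpat :: "(nat \<Rightarrow> nat \<Rightarrow> nat \<Rightarrow> real) \<Rightarrow> (nat \<Rightarrow> nat \<Rightarrow> real) \<Rightarrow> (nat \<Rightarrow> nat)
    \<Rightarrow> nat \<Rightarrow> nat \<Rightarrow> (nat \<Rightarrow> real) \<Rightarrow> nat \<times> nat \<Rightarrow> int" where
  "vpat W b d a k y = (\<lambda>(i, j). if a \<le> i \<and> i < a + k \<and> j < d i
      then sgi (aff W b d i (comp W b d a (i - a) y) j) else 0)"

lemma scaleR_fun_apply [simp]: "(r *\<^sub>R f) x = r *\<^sub>R f x"
  by (simp add: scaleR_fun_def)

lemma minus_fun_apply' [simp]: "(f - g) x = f x - (g x :: real)"
  by simp

lemma wk_sgi [simp]: "wk (sgi v) v"
  by (auto simp: wk_def sgi_def)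

lemma sgi_range [simp]: "sgi v \<in> {-1, 0, 1}"
  by (auto simp: sgi_def)

lemma sgi_0_iff [simp]: "sgi v = 0 \<longleftrightarrow> v = 0"
  by (auto simp: sgi_def)

lemma wk_0 [simp]: "wk c 0"
  by (auto simp: wk_def)

lemma okpat_vpat: "okpat d a k (vpat W b d a k y)"
  by (auto simp: okpat_def vpat_def sgi_def)

lemma vpat_at: "k' < k \<Longrightarrow> j < d (a + k') \<Longrightarrow>
   vpat W b d a k y (a + k', j) = sgi (aff W b d (a + k') (comp W b d a k' y) j)"
  by (simp add: vpat_def)

lemma okpat_mono: "okpat d a k c \<Longrightarrow> k' \<le> k \<Longrightarrow> okpat d a k' c"
  by (auto simp: okpat_def)

lemma comp_eq_lcomp:
  assumes "okpat d a k c"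
    and "\<forall>k'<k. \<forall>j<d (a + k'). wk (c (a + k', j)) (aff W b d (a + k') (comp W b d a k' y) j)"
  shows "comp W b d a k y = lcomp W b d c a k y"
  using assms
proof (induction k)
  case 0
  then show ?case by simp
next
  case (Suc k)
  have IH: "comp W b d a k y = lcomp W b d c a k y"
    using Suc by (auto simp: okpat_def)
  show ?case
  proof
    fix j
    show "comp W b d a (Suc k) y j = lcomp W b d c a (Suc k) y j"
    proof (cases "j < d (a + k)")
      case True
      have c: "c (a + k, j) \<in> {-1, 0, 1}" "wk (c (a + k, j)) (aff W b d (a + k) (comp W b d a k y) j)"
        using Suc.prems True by (auto simp: okpat_def)
      then show ?thesis using IH by (auto simp: layer_def llayer_def wk_def)
    next
      case False
      then show ?thesis by (simp add: layer_def llayer_def aff_def)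
    qed
  qed
qed

lemma lcomp_eq_comp:
  assumes "okpat d a k c"
    and "\<forall>k'<k. \<forall>j<d (a + k'). wk (c (a + k', j)) (aff W b d (a + k') (lcomp W b d c a k' y) j)"
  shows "comp W b d a k y = lcomp W b d c a k y"
  using assms
proof (induction k)
  case 0
  then show ?case by simp
next
  case (Suc k)
  have IH: "comp W b d a k y = lcomp W b d c a k y"
    using Suc by (auto simp: okpat_def)
  show ?case
  proof
    fix j
    show "comp W b d a (Suc k) y j = lcomp W b d c a (Suc k) y j"
    proof (cases "j < d (a + k)")
      case True
      have c: "c (a + k, j) \<in> {-1, 0, 1}" "wk (c (a + k, j)) (aff W b d (a + k) (lcomp W b d c a k y) j)"
        using Suc.prems True by (auto simp: okpat_def)
      then show ?thesis using IH by (auto simp: layer_def llayer_def wk_def)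
    next
      case False
      then show ?thesis by (simp add: layer_def llayer_def aff_def)
    qed
  qed
qed

lemma Pc_comp_lcomp:
  assumes "okpat d a k c" "y \<in> Pc W b d c a k" "k' \<le> k"
  shows "comp W b d a k' y = lcomp W b d c a k' y"
  using assms by (intro comp_eq_lcomp) (auto simp: Pc_def okpat_def)

lemma Pc_lin:
  assumes "okpat d a k c"
  shows "Pc W b d c a k = {y \<in> vec (d (a - 1)). \<forall>k'<k. \<forall>j<d (a + k').
      wk (c (a + k', j)) (aff W b d (a + k') (lcomp W b d c a k' y) j)}"
proof (intro set_eqI iffI)
  fix y assume y: "y \<in> Pc W b d c a k"
  then show "y \<in> {y \<in> vec (d (a - 1)). \<forall>k'<k. \<forall>j<d (a + k').
      wk (c (a + k', j)) (aff W b d (a + k') (lcomp W b d c a k' y) j)}"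
    using Pc_comp_lcomp[OF assms y] by (auto simp: Pc_def)
next
  fix y assume y: "y \<in> {y \<in> vec (d (a - 1)). \<forall>k'<k. \<forall>j<d (a + k').
      wk (c (a + k', j)) (aff W b d (a + k') (lcomp W b d c a k' y) j)}"
  have "comp W b d a k' y = lcomp W b d c a k' y" if "k' < k" for k'
    using that y assms by (intro lcomp_eq_comp) (auto simp: okpat_def)
  then show "y \<in> Pc W b d c a k" using y by (auto simp: Pc_def)
qed

lemma vec_in_Pc: "y \<in> vec (d (a - 1)) \<Longrightarrow> y \<in> Pc W b d (vpat W b d a k y) a k"
  by (auto simp: Pc_def vpat_at)

section \<open>Affine maps\<close>

definition affc :: "('a::real_vector \<Rightarrow> 'b::real_vector) \<Rightarrow> bool" where
  "affc f \<longleftrightarrow> (\<forall>x y u v. u + v = 1 \<longrightarrow> f (u *\<^sub>R x + v *\<^sub>R y) = u *\<^sub>R f x + v *\<^sub>R f y)"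

lemma affc_linear:
  fixes f :: "'a::real_vector \<Rightarrow> 'b::real_vector"
  assumes "affc f"
  shows "linear (\<lambda>x. f x - f 0)"
proof -
  have sc: "f (r *\<^sub>R x) - f 0 = r *\<^sub>R (f x - f 0)" for r x
  proof -
    have "f (r *\<^sub>R x) = f ((1 - r) *\<^sub>R 0 + r *\<^sub>R x)" by simp
    also have "\<dots> = (1 - r) *\<^sub>R f 0 + r *\<^sub>R f x" by (rule assms[unfolded affc_def, rule_format]) simp
    finally show ?thesis by (simp add: algebra_simps)
  qed
  show ?thesis
  proof (rule linearI)
    fix x y
    have "f (x + y) - f 0 = f (2 *\<^sub>R ((1/2) *\<^sub>R x + (1/2) *\<^sub>R y)) - f 0"
      by (simp add: scaleR_add_right)
    also have "\<dots> = 2 *\<^sub>R (f ((1/2) *\<^sub>R x + (1/2) *\<^sub>R y) - f 0)" by (rule sc)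
    also have "f ((1/2) *\<^sub>R x + (1/2) *\<^sub>R y) = (1/2) *\<^sub>R f x + (1/2) *\<^sub>R f y"
      by (rule assms[unfolded affc_def, rule_format]) simp
    finally show "f (x + y) - f 0 = (f x - f 0) + (f y - f 0)"
      by (simp add: algebra_simps scaleR_add_right scaleR_2)
  next
    fix r x show "f (r *\<^sub>R x) - f 0 = r *\<^sub>R (f x - f 0)" by (rule sc)
  qed
qed

lemma affc_comp: "affc f \<Longrightarrow> affc g \<Longrightarrow> affc (\<lambda>x. f (g x))"
  by (simp add: affc_def)

lemma affc_aff: "affc (aff W b d i)"
proof -
  have "aff W b d i (u *\<^sub>R x + v *\<^sub>R y) j = u * aff W b d i x j + v * aff W b d i y j"
    if "u + v = 1" for u v x y j
  proof (cases "j < d i")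
    case True
    have "b i j = u * b i j + v * b i j" using that by (metis distrib_right mult_1)
    then show ?thesis using True
      by (simp add: aff_def sum.distrib sum_distrib_left algebra_simps)
  qed (simp add: aff_def)
  then show ?thesis by (auto simp: affc_def fun_eq_iff)
qed

lemma affc_aff_coord: "affc (\<lambda>y. aff W b d i y j)"
proof -
  have "aff W b d i (u *\<^sub>R x + v *\<^sub>R y) j = u * aff W b d i x j + v * aff W b d i y j"
    if "u + v = 1" for u v x y
    using affc_aff[of W b d i] that by (simp add: affc_def fun_eq_iff)
  then show ?thesis by (simp add: affc_def)
qed

lemma affc_llayer: "affc (llayer W b d c i)"
  using affc_aff[of W b d i] by (auto simp: affc_def llayer_def fun_eq_iff)

lemma affc_lcomp: "affc (lcomp W b d c a k)"
proof (induction k)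
  case 0
  then show ?case by (simp add: affc_def)
next
  case (Suc k)
  then show ?case using affc_comp[OF affc_llayer Suc] by simp
qed

lemma affc_node: "affc (\<lambda>y. aff W b d i (lcomp W b d c a k y) j)"
  using affc_comp[OF affc_aff_coord affc_lcomp] .

section \<open>Continuity\<close>

lemma cont_aff:
  assumes "\<And>k. continuous_on UNIV (\<lambda>y. F y k :: real)"
  shows "continuous_on UNIV (\<lambda>y. aff W b d i (F y) j)"
  unfolding aff_def using assms by (cases "j < d i") (auto intro!: continuous_intros)

lemma cont_lcomp: "continuous_on UNIV (\<lambda>y. lcomp W b d c a k y j)"
proof (induction k arbitrary: j)
  case 0
  then show ?case by simp
next
  case (Suc k)
  show ?case
  proof (cases "c (a + k, j) = 1")
    case True
    then show ?thesis unfolding lcomp.simps llayer_def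
      using cont_aff[of "lcomp W b d c a k", OF Suc.IH] by simp
  next
    case False
    then show ?thesis unfolding lcomp.simps llayer_def by simp
  qed
qed

lemma cont_node: "continuous_on UNIV (\<lambda>y. aff W b d i (lcomp W b d c a k y) j)"
  by (rule cont_aff) (rule cont_lcomp)

section \<open>Relative interior\<close>

lemma RIline:
  fixes S :: "(nat \<Rightarrow> real) set"
  assumes "x \<in> rel_interior S" "y \<in> S"
  shows "\<exists>t>0. x + t *\<^sub>R (x - y) \<in> S"
proof -
  from assms(1) obtain T where T: "open T" "x \<in> T" "T \<inter> affine hull S \<subseteq> S" and xS: "x \<in> S"
    by (auto simp: rel_interior)
  define p where "p t = x + t *\<^sub>R (x - y)" for t :: real
  have "continuous_on UNIV (\<lambda>t. p t i)" for i
  proof -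
    have eq: "(\<lambda>t. p t i) = (\<lambda>t. x i + t * (x i - y i))" by (simp add: p_def)
    show ?thesis unfolding eq
      by (intro continuous_on_add continuous_on_const continuous_on_mult_right continuous_on_id)
  qed
  then have "continuous_on UNIV p" by (rule continuous_on_coordinatewise_then_product)
  then have op: "open (p -` T)" using T(1) by (simp add: continuous_on_open_vimage)
  have z: "0 \<in> p -` T" using T(2) by (simp add: p_def)
  obtain e where e: "e > 0" "ball 0 e \<subseteq> p -` T"
    using open_contains_ball[THEN iffD1, OF op] z by blast
  have "e / 2 \<in> ball 0 e" using e by (simp add: dist_real_def)
  then have pT: "p (e / 2) \<in> T" using e(2) by blast
  have eqp: "p (e/2) = (1 + e/2) *\<^sub>R x + (- (e/2)) *\<^sub>R y"
    unfolding p_def by (rule ext) (simp add: algebra_simps)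
  have hx: "x \<in> affine hull S" "y \<in> affine hull S"
    by (rule subsetD[OF hull_subset xS], rule subsetD[OF hull_subset assms(2)])
  have "(1 + e/2) *\<^sub>R x + (- (e/2)) *\<^sub>R y \<in> affine hull S"
    by (rule mem_affine[OF affine_affine_hull hx]) simp
  then have pA: "p (e/2) \<in> affine hull S" using eqp by simp
  have "p (e/2) \<in> S" using T(3) pT pA by blast
  then have "x + (e/2) *\<^sub>R (x - y) \<in> S" unfolding p_def .
  then show ?thesis using e(1) by (intro exI[of _ "e/2"]) simp
qed

definition nds :: "(nat \<Rightarrow> nat) \<Rightarrow> nat \<Rightarrow> nat \<Rightarrow> (nat \<times> nat) set" where
  "nds d a k = {(i, j). a \<le> i \<and> i < a + k \<and> j < d i}"

definition anode :: "(nat \<Rightarrow> nat \<Rightarrow> nat \<Rightarrow> real) \<Rightarrow> (nat \<Rightarrow> nat \<Rightarrow> real) \<Rightarrow> (nat \<Rightarrow> nat)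
    \<Rightarrow> nat \<Rightarrow> nat \<times> nat \<Rightarrow> (nat \<Rightarrow> real) \<Rightarrow> real" where
  "anode W b d a l y = aff W b d (fst l) (comp W b d a (fst l - a) y) (snd l)"

definition gnode :: "(nat \<Rightarrow> nat \<Rightarrow> nat \<Rightarrow> real) \<Rightarrow> (nat \<Rightarrow> nat \<Rightarrow> real) \<Rightarrow> (nat \<Rightarrow> nat)
    \<Rightarrow> (nat \<times> nat \<Rightarrow> int) \<Rightarrow> nat \<Rightarrow> nat \<times> nat \<Rightarrow> (nat \<Rightarrow> real) \<Rightarrow> real" where
  "gnode W b d c a l y = aff W b d (fst l) (lcomp W b d c a (fst l - a) y) (snd l)"

lemma finite_nds: "finite (nds d a k)"
proof -
  have "nds d a k = (\<Union>i\<in>{a..<a+k}. {i} \<times> {..<d i})" by (auto simp: nds_def)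
  then show ?thesis by simp
qed

lemma all_nds: "(\<forall>k'<k. \<forall>j<d (a + k'). P (a + k') j) \<longleftrightarrow> (\<forall>l\<in>nds d a k. P (fst l) (snd l))"
proof
  assume H: "\<forall>k'<k. \<forall>j<d (a + k'). P (a + k') j"
  show "\<forall>l\<in>nds d a k. P (fst l) (snd l)"
  proof
    fix l assume "l \<in> nds d a k"
    then obtain i j where l: "l = (i, j)" "a \<le> i" "i < a + k" "j < d i" by (auto simp: nds_def)
    then have "i - a < k" by auto
    then show "P (fst l) (snd l)" using H[rule_format, of "i - a" j] l by simp
  qed
next
  assume H: "\<forall>l\<in>nds d a k. P (fst l) (snd l)"
  show "\<forall>k'<k. \<forall>j<d (a + k'). P (a + k') j"
  proof (intro allI impI)
    fix k' j assume "k' < k" "j < d (a + k')"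
    then have "(a + k', j) \<in> nds d a k" by (auto simp: nds_def)
    then show "P (a + k') j" using H by fastforce
  qed
qed

lemma Pc_nds: "Pc W b d c a k = {y \<in> vec (d (a - 1)). \<forall>l\<in>nds d a k. wk (c l) (anode W b d a l y)}"
  unfolding Pc_def anode_def using all_nds[of k d a "\<lambda>i j. wk (c (i, j)) (aff W b d i (comp W b d a (i - a) _) j)"]
  by auto

lemma okpat_nds: "okpat d a k c \<longleftrightarrow> (\<forall>l\<in>nds d a k. c l \<in> {-1, 0, 1})"
  unfolding okpat_def using all_nds[of k d a "\<lambda>i j. c (i, j) \<in> {-1, 0, 1}"] by auto

lemma Pc_lin_nds:
  assumes "okpat d a k c"
  shows "Pc W b d c a k = {y \<in> vec (d (a - 1)). \<forall>l\<in>nds d a k. wk (c l) (gnode W b d c a l y)}"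
  unfolding Pc_lin[OF assms] gnode_def
  using all_nds[of k d a "\<lambda>i j. wk (c (i, j)) (aff W b d i (lcomp W b d c a (i - a) _) j)"]
  by auto

lemma anode_gnode:
  assumes "okpat d a k c" "y \<in> Pc W b d c a k" "l \<in> nds d a k"
  shows "anode W b d a l y = gnode W b d c a l y"
proof -
  have "fst l - a \<le> k" using assms(3) by (auto simp: nds_def)
  then show ?thesis using Pc_comp_lcomp[OF assms(1,2)] by (simp add: anode_def gnode_def)
qed

lemma vpat_nds: "l \<in> nds d a k \<Longrightarrow> vpat W b d a k y l = sgi (anode W b d a l y)"
  by (auto simp: vpat_def nds_def anode_def)

lemma vpat_out: "l \<notin> nds d a k \<Longrightarrow> vpat W b d a k y l = 0"
  by (cases l) (auto simp: vpat_def nds_def)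

lemma affc_gnode: "affc (gnode W b d c a l)"
  unfolding gnode_def by (rule affc_node)

lemma affc_real: "affc (f :: 'a::real_vector \<Rightarrow> real) \<Longrightarrow> u + v = 1 \<Longrightarrow> f (u *\<^sub>R x + v *\<^sub>R y) = u * f x + v * f y"
  by (simp add: affc_def)

lemma vec_affine: "x \<in> vec n \<Longrightarrow> y \<in> vec n \<Longrightarrow> u *\<^sub>R x + v *\<^sub>R y \<in> vec n"
  by (simp add: vec_def)

lemma vec_diff: "x \<in> vec n \<Longrightarrow> y \<in> vec n \<Longrightarrow> x - y \<in> vec n"
  by (simp add: vec_def)

lemma wk_trans: "c \<in> {-1, 0, 1} \<Longrightarrow> wk c vx \<Longrightarrow> wk (sgi vx) vy \<Longrightarrow> wk c vy"
  by (cases "vx > 0"; cases "vx < 0") (auto simp: wk_def sgi_def)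

lemma wk_back: "c \<in> {-1, 0, 1} \<Longrightarrow> wk c vx \<Longrightarrow> wk c vy \<Longrightarrow> (vx = 0 \<longrightarrow> vy = 0) \<Longrightarrow> wk (sgi vx) vy"
  by (cases "vx > 0"; cases "vx < 0") (auto simp: wk_def sgi_def)

lemma pat_eq:
  assumes ok: "okpat d a k c" and x: "x \<in> Pc W b d c a k"
    and Z: "\<forall>y\<in>Pc W b d c a k. \<forall>l\<in>nds d a k. anode W b d a l x = 0 \<longrightarrow> anode W b d a l y = 0"
  shows "Pc W b d (vpat W b d a k x) a k = Pc W b d c a k"
proof (intro set_eqI iffI)
  have okl: "\<And>l. l \<in> nds d a k \<Longrightarrow> c l \<in> {-1, 0, 1}" using ok by (simp add: okpat_nds)
  have xl: "\<And>l. l \<in> nds d a k \<Longrightarrow> wk (c l) (anode W b d a l x)" using x by (simp add: Pc_nds)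
  {
    fix y assume y: "y \<in> Pc W b d (vpat W b d a k x) a k"
    have "y \<in> vec (d (a - 1))" and H: "\<forall>l\<in>nds d a k. wk (sgi (anode W b d a l x)) (anode W b d a l y)"
      using y by (auto simp: Pc_nds vpat_nds)
    then show "y \<in> Pc W b d c a k"
      unfolding Pc_nds using wk_trans[OF okl xl] by blast
  }
  {
    fix y assume y: "y \<in> Pc W b d c a k"
    have "y \<in> vec (d (a - 1))" and H: "\<forall>l\<in>nds d a k. wk (c l) (anode W b d a l y)"
      using y by (auto simp: Pc_nds)
    have "wk (sgi (anode W b d a l x)) (anode W b d a l y)" if "l \<in> nds d a k" for l
      using wk_back[OF okl[OF that] xl[OF that]] H Z y that by blast
    then show "y \<in> Pc W b d (vpat W b d a k x) a k"
      using \<open>y \<in> vec (d (a - 1))\<close> by (auto simp: Pc_nds vpat_nds)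
  }
qed

lemma cellpat:
  assumes ok: "okpat d a k c" and x: "x \<in> rel_interior (Pc W b d c a k)"
  shows "Pc W b d (vpat W b d a k x) a k = Pc W b d c a k"
proof (rule pat_eq[OF ok])
  let ?E = "Pc W b d c a k"
  show xE: "x \<in> ?E" using x rel_interior_subset by blast
  have okl: "\<And>l. l \<in> nds d a k \<Longrightarrow> c l \<in> {-1, 0, 1}" using ok by (simp add: okpat_nds)
  show "\<forall>y\<in>?E. \<forall>l\<in>nds d a k. anode W b d a l x = 0 \<longrightarrow> anode W b d a l y = 0"
  proof (intro ballI impI)
    fix y l assume y: "y \<in> ?E" and l: "l \<in> nds d a k" and x0: "anode W b d a l x = 0"
    obtain t where t: "t > 0" "x + t *\<^sub>R (x - y) \<in> ?E" using RIline[OF x y] by blast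
    define z where "z = x + t *\<^sub>R (x - y)"
    have zE: "z \<in> ?E" using t by (simp add: z_def)
    have "z = (1 + t) *\<^sub>R x + (- t) *\<^sub>R y" unfolding z_def by (rule ext) (simp add: algebra_simps)
    then have "gnode W b d c a l z = (1 + t) * gnode W b d c a l x + (- t) * gnode W b d c a l y"
      using affc_real[OF affc_gnode, of "1 + t" "- t"] by simp
    then have "anode W b d a l z = (1 + t) * anode W b d a l x + (- t) * anode W b d a l y"
      using anode_gnode[OF ok _ l] zE xE y by simp
    then have az: "anode W b d a l z = - t * anode W b d a l y" using x0 by simp
    have "wk (c l) (anode W b d a l y)" "wk (c l) (anode W b d a l z)"
      using y zE l by (auto simp: Pc_nds)
    then show "anode W b d a l y = 0" using okl[OF l] az t(1)
      by (auto simp: wk_def mult_le_0_iff zero_le_mult_iff)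
  qed
qed

lemma wk_avg: "wk c p \<Longrightarrow> wk c q \<Longrightarrow> wk c ((1/2) * p + (1/2) * q)"
  by (auto simp: wk_def)

lemma wk_avg_nz: "c \<in> {-1, 0, 1} \<Longrightarrow> wk c p \<Longrightarrow> wk c q \<Longrightarrow> p \<noteq> 0 \<or> q \<noteq> 0 \<Longrightarrow> (1/2) * p + (1/2) * q \<noteq> 0"
  by (auto simp: wk_def)

lemma exists_gen:
  assumes ok: "okpat d a k c" and ne: "Pc W b d c a k \<noteq> {}"
  shows "\<exists>x\<in>Pc W b d c a k. Pc W b d (vpat W b d a k x) a k = Pc W b d c a k"
proof -
  let ?E = "Pc W b d c a k"
  define nz where "nz x = {l \<in> nds d a k. anode W b d a l x \<noteq> 0}" for x
  have fin: "finite (nz x)" for x using finite_nds by (simp add: nz_def)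
  have bnd: "card (nz x) < card (nds d a k) + 1" for x
  proof -
    have "nz x \<subseteq> nds d a k" by (auto simp: nz_def)
    from card_mono[OF finite_nds this] show ?thesis by linarith
  qed
  obtain x0 where x0: "x0 \<in> ?E" "\<forall>y. y \<in> ?E \<longrightarrow> card (nz y) \<le> card (nz x0)"
    using ex_has_greatest_nat[of "\<lambda>x. x \<in> ?E", OF _ , of _ "\<lambda>x. card (nz x)" "card (nds d a k) + 1"] ne bnd
    by blast
  have okl: "\<And>l. l \<in> nds d a k \<Longrightarrow> c l \<in> {-1, 0, 1}" using ok by (simp add: okpat_nds)
  show ?thesis
  proof (intro bexI[OF _ x0(1)] pat_eq[OF ok x0(1)] ballI impI)
    fix y l assume y: "y \<in> ?E" and l: "l \<in> nds d a k" and z0: "anode W b d a l x0 = 0"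
    show "anode W b d a l y = 0"
    proof (rule ccontr)
      assume ny: "anode W b d a l y \<noteq> 0"
      define z where "z = (1/2) *\<^sub>R x0 + (1/2) *\<^sub>R y"
      have gz: "gnode W b d c a l' z = (1/2) * gnode W b d c a l' x0 + (1/2) * gnode W b d c a l' y" for l'
        unfolding z_def by (rule affc_real[OF affc_gnode]) simp
      have zE: "z \<in> ?E"
      proof -
        have "z \<in> vec (d (a - 1))" unfolding z_def
          using x0(1) y by (intro vec_affine) (auto simp: Pc_def)
        moreover have "wk (c l') (gnode W b d c a l' z)" if "l' \<in> nds d a k" for l'
          using x0(1) y that unfolding gz by (intro wk_avg) (auto simp: Pc_lin_nds[OF ok])
        ultimately show ?thesis by (simp add: Pc_lin_nds[OF ok])
      qed
      have az: "anode W b d a l' z = (1/2) * anode W b d a l' x0 + (1/2) * anode W b d a l' y"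
        if "l' \<in> nds d a k" for l'
        using gz[of l'] anode_gnode[OF ok _ that] zE x0(1) y by simp
      have "nz x0 \<subset> nz z"
      proof
        show "nz x0 \<subseteq> nz z"
        proof
          fix l' assume "l' \<in> nz x0"
          then have l': "l' \<in> nds d a k" "anode W b d a l' x0 \<noteq> 0" by (auto simp: nz_def)
          have "wk (c l') (anode W b d a l' x0)" "wk (c l') (anode W b d a l' y)"
            using x0(1) y l'(1) by (auto simp: Pc_nds)
          then have "anode W b d a l' z \<noteq> 0" unfolding az[OF l'(1)]
            using wk_avg_nz[OF okl[OF l'(1)]] l'(2) by blast
          then show "l' \<in> nz z" using l' by (simp add: nz_def)
        qed
        have "wk (c l) (anode W b d a l x0)" "wk (c l) (anode W b d a l y)"
          using x0(1) y l by (auto simp: Pc_nds)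
        then have "anode W b d a l z \<noteq> 0" unfolding az[OF l]
          using wk_avg_nz[OF okl[OF l]] ny by blast
        then have "l \<in> nz z" "l \<notin> nz x0" using l z0 by (auto simp: nz_def)
        then show "nz x0 \<noteq> nz z" by blast
      qed
      then have "card (nz x0) < card (nz z)" using fin psubset_card_mono by blast
      then show False using x0(2) zE by fastforce
    qed
  qed
qed

lemma cont_gnode: "continuous_on UNIV (gnode W b d c a l)"
  unfolding gnode_def by (rule cont_node)

lemma wk_of_pos: "s \<in> {-1, 0, 1} \<Longrightarrow> s \<noteq> 0 \<Longrightarrow> 0 < real_of_int s * v \<Longrightarrow> wk s v"
  by (auto simp: wk_def zero_less_mult_iff)

lemma pos_of_sgi: "sgi v \<noteq> 0 \<Longrightarrow> 0 < real_of_int (sgi v) * v"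
  by (auto simp: sgi_def)

lemma RI:
  assumes y: "y \<in> vec (d (a - 1))"
  shows "y \<in> rel_interior (Pc W b d (vpat W b d a k y) a k)"
proof -
  define \<sigma> where "\<sigma> = vpat W b d a k y"
  define E where "E = Pc W b d \<sigma> a k"
  have ok: "okpat d a k \<sigma>" unfolding \<sigma>_def by (rule okpat_vpat)
  have yE: "y \<in> E" unfolding E_def \<sigma>_def using y by (rule vec_in_Pc)
  have okl: "\<And>l. l \<in> nds d a k \<Longrightarrow> \<sigma> l \<in> {-1, 0, 1}" using ok by (simp add: okpat_nds)
  define A where "A = {z \<in> vec (d (a - 1)). \<forall>l\<in>nds d a k. \<sigma> l = 0 \<longrightarrow> gnode W b d \<sigma> a l z = 0}"
  have affA: "affine A"
  proof (unfold affine_def, intro ballI allI impI)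
    fix x z :: "nat \<Rightarrow> real" and u v :: real
    assume "x \<in> A" "z \<in> A" "u + v = 1"
    then show "u *\<^sub>R x + v *\<^sub>R z \<in> A" unfolding A_def
      using affc_real[OF affc_gnode, of u v] by (auto intro: vec_affine)
  qed
  have EA: "E \<subseteq> A"
  proof
    fix z assume z: "z \<in> E"
    have "gnode W b d \<sigma> a l z = 0" if "l \<in> nds d a k" "\<sigma> l = 0" for l
    proof -
      have "wk (\<sigma> l) (anode W b d a l z)" using z that by (auto simp: E_def Pc_nds)
      then have "anode W b d a l z = 0" using that by (simp add: wk_def)
      then show ?thesis using anode_gnode[OF ok z[unfolded E_def] that(1)] by simp
    qed
    then show "z \<in> A" using z by (auto simp: A_def E_def Pc_def)
  qed
  have hullA: "affine hull E \<subseteq> A" using hull_minimal[of E A affine] EA affA by blast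
  define NZ where "NZ = {l \<in> nds d a k. \<sigma> l \<noteq> 0}"
  define U where "U = (\<Inter>l\<in>NZ. {z. 0 < real_of_int (\<sigma> l) * gnode W b d \<sigma> a l z})"
  have finNZ: "finite NZ" using finite_nds by (simp add: NZ_def)
  have openU: "open U" unfolding U_def
  proof (rule open_INT[OF finNZ], rule ballI)
    fix l
    show "open {z. 0 < real_of_int (\<sigma> l) * gnode W b d \<sigma> a l z}"
      by (rule open_Collect_less) (auto intro!: continuous_on_mult_left cont_gnode)
  qed
  have yU: "y \<in> U"
  proof -
    have "0 < real_of_int (\<sigma> l) * gnode W b d \<sigma> a l y" if "l \<in> NZ" for l
    proof -
      have l: "l \<in> nds d a k" "\<sigma> l \<noteq> 0" using that by (auto simp: NZ_def)
      have "\<sigma> l = sgi (anode W b d a l y)" using l(1) by (simp add: \<sigma>_def vpat_nds)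
      then show ?thesis using pos_of_sgi[of "anode W b d a l y"] l
        anode_gnode[OF ok yE[unfolded E_def] l(1)] by simp
    qed
    then show ?thesis by (simp add: U_def)
  qed
  have sub: "U \<inter> affine hull E \<subseteq> E"
  proof
    fix z assume "z \<in> U \<inter> affine hull E"
    then have zU: "z \<in> U" and zA: "z \<in> A" using hullA by auto
    have "wk (\<sigma> l) (gnode W b d \<sigma> a l z)" if "l \<in> nds d a k" for l
    proof (cases "\<sigma> l = 0")
      case True
      then show ?thesis using zA that by (simp add: A_def)
    next
      case False
      then have "l \<in> NZ" using that by (simp add: NZ_def)
      then have "0 < real_of_int (\<sigma> l) * gnode W b d \<sigma> a l z" using zU by (simp add: U_def)
      then show ?thesis using wk_of_pos[OF okl[OF that] False] by simp
    qed
    then show "z \<in> E" using zA by (simp add: E_def Pc_lin_nds[OF ok] A_def)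
  qed
  have "y \<in> rel_interior E" unfolding rel_interior using yE openU yU sub by blast
  then show ?thesis by (simp add: E_def \<sigma>_def)
qed

lemma comp_vec: "y \<in> vec (d (a - 1)) \<Longrightarrow> comp W b d a k y \<in> vec (d (a + k - 1))"
  by (cases k) (auto simp: vec_def layer_def aff_def)

lemma all_lessSuc: "(\<forall>i<Suc n. P i) \<longleftrightarrow> (\<forall>i<n. P i) \<and> P n"
  by (auto simp: less_Suc_eq)

lemma Pc_Suc: "Pc W b d c a (Suc k) = {y \<in> Pc W b d c a k. \<forall>j<d (a + k).
   wk (c (a + k, j)) (aff W b d (a + k) (comp W b d a k y) j)}"
  unfolding Pc_def all_lessSuc by auto

lemma canon_char: "canon W b d a k = {E. E \<noteq> {} \<and> (\<exists>c. okpat d a k c \<and> E = Pc W b d c a k)}"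
proof (induction k)
  case 0
  have "0 \<in> vec (d (a - 1))" by (simp add: vec_def)
  moreover have "Pc W b d c a 0 = vec (d (a - 1))" for c by (simp add: Pc_def)
  moreover have "okpat d a 0 c" for c by (simp add: okpat_def)
  ultimately show ?case by auto
next
  case (Suc k)
  show ?case
  proof (intro set_eqI iffI)
    fix E assume "E \<in> canon W b d a (Suc k)"
    then obtain C R where E0: "E \<noteq> {}" and C: "C \<in> canon W b d a k" and R: "R \<in> Rcx W b d (a + k)"
      and EC: "E = C \<inter> {x \<in> vec (d (a - 1)). comp W b d a k x \<in> R}" by auto
    from C Suc.IH obtain c where ok: "okpat d a k c" and Cc: "C = Pc W b d c a k" by auto
    from R obtain c' :: "nat \<Rightarrow> int" where c': "\<forall>j<d (a + k). c' j \<in> {-1, 0, 1}" and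
      Rc: "R = {y \<in> vec (d (a + k - 1)). \<forall>j<d (a + k).
            (c' j = 1 \<longrightarrow> aff W b d (a + k) y j \<ge> 0) \<and>
            (c' j = -1 \<longrightarrow> aff W b d (a + k) y j \<le> 0) \<and>
            (c' j = 0 \<longrightarrow> aff W b d (a + k) y j = 0)}"
      unfolding Rcx_def by auto
    define c'' where "c'' = (\<lambda>(i, j). if i = a + k then c' j else c (i, j))"
    have ok'': "okpat d a (Suc k) c''"
      using ok c' unfolding okpat_def all_lessSuc by (auto simp: c''_def)
    have same: "Pc W b d c'' a k = Pc W b d c a k"
      unfolding Pc_def by (auto simp: c''_def)
    have "E = Pc W b d c'' a (Suc k)"
    proof (intro set_eqI)
      fix x
      show "x \<in> E \<longleftrightarrow> x \<in> Pc W b d c'' a (Suc k)"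
        unfolding EC Cc Rc Pc_Suc same using comp_vec[of x d a W b k]
        by (auto simp: c''_def wk_def Pc_def)
    qed
    then show "E \<in> {E. E \<noteq> {} \<and> (\<exists>c. okpat d a (Suc k) c \<and> E = Pc W b d c a (Suc k))}"
      using E0 ok'' by auto
  next
    fix E assume "E \<in> {E. E \<noteq> {} \<and> (\<exists>c. okpat d a (Suc k) c \<and> E = Pc W b d c a (Suc k))}"
    then obtain c where E0: "E \<noteq> {}" and ok: "okpat d a (Suc k) c" and Ec: "E = Pc W b d c a (Suc k)"
      by auto
    define C where "C = Pc W b d c a k"
    define c' where "c' j = c (a + k, j)" for j
    define R where "R = {y \<in> vec (d (a + k - 1)). \<forall>j<d (a + k).
            (c' j = 1 \<longrightarrow> aff W b d (a + k) y j \<ge> 0) \<and>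
            (c' j = -1 \<longrightarrow> aff W b d (a + k) y j \<le> 0) \<and>
            (c' j = 0 \<longrightarrow> aff W b d (a + k) y j = 0)}"
    have EC: "E = C \<inter> {x \<in> vec (d (a - 1)). comp W b d a k x \<in> R}"
      unfolding Ec C_def R_def Pc_Suc using comp_vec[of _ d a W b k]
      by (auto simp: c'_def wk_def Pc_def)
    have "C \<in> canon W b d a k"
      using Suc.IH okpat_mono[OF ok, of k] E0 Ec by (auto simp: C_def Pc_Suc)
    moreover have "R \<in> Rcx W b d (a + k)"
    proof -
      obtain x where "x \<in> E" using E0 by blast
      then have "R \<noteq> {}" using EC by auto
      moreover have "\<forall>j<d (a + k). c' j \<in> {-1, 0, 1}"
        using ok unfolding okpat_def all_lessSuc by (simp add: c'_def)
      ultimately show ?thesis unfolding Rcx_def R_def by auto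
    qed
    ultimately show "E \<in> canon W b d a (Suc k)" using E0 EC by auto
  qed
qed

definition indep_on :: "(nat \<Rightarrow> real) set \<Rightarrow> ('l \<Rightarrow> (nat \<Rightarrow> real) \<Rightarrow> real) \<Rightarrow> 'l set \<Rightarrow> bool" where
  "indep_on V \<phi> L \<longleftrightarrow> (\<forall>\<alpha>. (\<forall>v\<in>V. (\<Sum>l\<in>L. \<alpha> l * \<phi> l v) = 0) \<longrightarrow> (\<forall>l\<in>L. \<alpha> l = 0))"

lemma subspace_ker:
  assumes "subspace V" "\<forall>l\<in>L. linear (\<phi> l :: (nat \<Rightarrow> real) \<Rightarrow> real)"
  shows "subspace {v \<in> V. \<forall>l\<in>L. \<phi> l v = 0}"
  using assms unfolding subspace_def
  by (auto simp: linear_0 linear_add linear_scale)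

lemma subspace_vec: "subspace (vec n)"
  by (auto simp: subspace_def vec_def)

definition ev :: "nat \<Rightarrow> nat \<Rightarrow> real" where "ev k = (\<lambda>i. if i = k then 1 else 0)"

lemma vec_span: "vec n \<subseteq> span (ev ` {..<n})"
proof
  fix x assume x: "x \<in> vec n"
  have "x = (\<Sum>k<n. x k *\<^sub>R ev k)"
  proof
    fix i
    have "(\<Sum>k<n. x k *\<^sub>R ev k) i = (\<Sum>k<n. x k * ev k i)"
      by (induction n) auto
    also have "\<dots> = (\<Sum>k\<in>{..<n}. if k = i then x i else 0)"
      by (rule sum.cong) (auto simp: ev_def)
    also have "\<dots> = x i" using x by (cases "i < n") (auto simp: vec_def)
    finally show "x i = (\<Sum>k<n. x k *\<^sub>R ev k) i" by simp
  qed
  also have "\<dots> \<in> span (ev ` {..<n})"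
    by (intro span_sum span_scale span_base) auto
  finally show "x \<in> span (ev ` {..<n})" .
qed

lemma indep_finite:
  assumes "independent B" "B \<subseteq> vec n"
  shows "finite B"
  using independent_span_bound[OF _ assms(1), of "ev ` {..<n}"] assms(2) vec_span by blast

lemma dim_drop:
  assumes S: "subspace S" "S \<subseteq> vec n" and lin: "linear (\<phi> :: (nat \<Rightarrow> real) \<Rightarrow> real)"
    and u: "u \<in> S" "\<phi> u \<noteq> 0"
  shows "dim S = dim {v \<in> S. \<phi> v = 0} + 1"
proof -
  let ?K = "{v \<in> S. \<phi> v = 0}"
  have subK: "subspace ?K" using subspace_ker[OF S(1), of "{()}" "\<lambda>_. \<phi>"] lin by simp
  obtain B where B: "B \<subseteq> ?K" "independent B" "?K \<subseteq> span B" "card B = dim ?K"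
    using basis_exists[of ?K] by blast
  have finB: "finite B" using indep_finite[OF B(2)] B(1) S(2) by blast
  have spanB: "span B \<subseteq> ?K" using span_minimal[OF B(1) subK] .
  have uB: "u \<notin> span B" using spanB u(2) by blast
  have uB': "u \<notin> B" using B(1) u(2) by blast
  show ?thesis
  proof (rule dim_unique[of "insert u B"])
    show "insert u B \<subseteq> S" using B(1) u(1) by blast
    show "independent (insert u B)" using B(2) uB by (simp add: independent_insertI)
    show "card (insert u B) = dim ?K + 1" using finB uB' B(4) by simp
    show "S \<subseteq> span (insert u B)"
    proof
      fix v assume v: "v \<in> S"
      define t where "t = \<phi> v / \<phi> u"
      have "v - t *\<^sub>R u \<in> ?K"
      proof -
        have "v - t *\<^sub>R u \<in> S" using S(1) v u(1) by (simp add: subspace_diff subspace_scale)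
        moreover have "\<phi> (v - t *\<^sub>R u) = 0" using u(2) by (simp add: linear_diff[OF lin] linear_scale[OF lin] t_def)
        ultimately show ?thesis by simp
      qed
      then have "v - t *\<^sub>R u \<in> span (insert u B)" using B(3) span_mono[of B "insert u B"] by blast
      moreover have "t *\<^sub>R u \<in> span (insert u B)" by (intro span_scale span_base) simp
      ultimately have "(v - t *\<^sub>R u) + t *\<^sub>R u \<in> span (insert u B)" by (rule span_add)
      then show "v \<in> span (insert u B)" by simp
    qed
  qed
qed

lemma dual:
  assumes "finite L"
  shows "subspace V \<Longrightarrow> \<forall>l\<in>L. linear (\<phi> l :: (nat \<Rightarrow> real) \<Rightarrow> real) \<Longrightarrow> linear (\<psi> :: (nat \<Rightarrow> real) \<Rightarrow> real)
    \<Longrightarrow> \<forall>v\<in>V. (\<forall>l\<in>L. \<phi> l v = 0) \<longrightarrow> \<psi> v = 0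
    \<Longrightarrow> \<exists>\<alpha>. \<forall>v\<in>V. \<psi> v = (\<Sum>l\<in>L. \<alpha> l * \<phi> l v)"
  using assms
proof (induction L arbitrary: V rule: finite_induct)
  case empty
  then show ?case by auto
next
  case (insert l1 L)
  let ?V' = "{v \<in> V. \<forall>l\<in>{l1}. \<phi> l v = 0}"
  have subV': "subspace ?V'" using subspace_ker[OF insert.prems(1), of "{l1}" \<phi>] insert.prems(2) by simp
  have "\<forall>v\<in>?V'. (\<forall>l\<in>L. \<phi> l v = 0) \<longrightarrow> \<psi> v = 0" using insert.prems(4) by auto
  then obtain \<alpha> where \<alpha>: "\<forall>v\<in>?V'. \<psi> v = (\<Sum>l\<in>L. \<alpha> l * \<phi> l v)"
    using insert.IH[OF subV'] insert.prems(2,3) by blast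
  have lin1: "linear (\<phi> l1)" using insert.prems(2) by simp
  have linL: "\<And>l. l \<in> L \<Longrightarrow> linear (\<phi> l)" using insert.prems(2) by simp
  show ?case
  proof (cases "\<forall>v\<in>V. \<phi> l1 v = 0")
    case True
    show ?thesis
    proof (intro exI[of _ "\<alpha>(l1 := 0)"] ballI)
      fix v assume v: "v \<in> V"
      have "(\<Sum>l\<in>insert l1 L. (\<alpha>(l1 := 0)) l * \<phi> l v) = (\<Sum>l\<in>L. \<alpha> l * \<phi> l v)"
        using insert.hyps by (simp add: sum.insert) (rule sum.cong, auto)
      then show "\<psi> v = (\<Sum>l\<in>insert l1 L. (\<alpha>(l1 := 0)) l * \<phi> l v)" using \<alpha> True v by simp
    qed
  next
    case False
    then obtain u where u: "u \<in> V" "\<phi> l1 u \<noteq> 0" by blast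
    define c where "c = (\<psi> u - (\<Sum>l\<in>L. \<alpha> l * \<phi> l u)) / \<phi> l1 u"
    show ?thesis
    proof (intro exI[of _ "\<alpha>(l1 := c)"] ballI)
      fix v assume v: "v \<in> V"
      define t where "t = \<phi> l1 v / \<phi> l1 u"
      have w: "v - t *\<^sub>R u \<in> ?V'"
        using insert.prems(1) v u(1) u(2)
        by (simp add: subspace_diff subspace_scale linear_diff[OF lin1] linear_scale[OF lin1] t_def)
      have "\<psi> (v - t *\<^sub>R u) = (\<Sum>l\<in>L. \<alpha> l * \<phi> l (v - t *\<^sub>R u))" using \<alpha> w by blast
      also have "\<dots> = (\<Sum>l\<in>L. \<alpha> l * \<phi> l v) - t * (\<Sum>l\<in>L. \<alpha> l * \<phi> l u)"
        by (simp add: linear_diff[OF linL] linear_scale[OF linL] sum_subtractf sum_distrib_left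
            algebra_simps cong: sum.cong)
      finally have e0: "\<psi> (v - t *\<^sub>R u) = (\<Sum>l\<in>L. \<alpha> l * \<phi> l v) - t * (\<Sum>l\<in>L. \<alpha> l * \<phi> l u)" .
      have "\<psi> (v - t *\<^sub>R u) = \<psi> v - t * \<psi> u"
        by (simp only: linear_diff[OF insert.prems(3)] linear_scale[OF insert.prems(3)] real_scaleR_def)
      then have e: "\<psi> v - t * \<psi> u = (\<Sum>l\<in>L. \<alpha> l * \<phi> l v) - t * (\<Sum>l\<in>L. \<alpha> l * \<phi> l u)"
        using e0 by simp
      have "c * \<phi> l1 v = t * (\<psi> u - (\<Sum>l\<in>L. \<alpha> l * \<phi> l u))"
        using u(2) by (simp add: c_def t_def field_simps)
      then have "\<psi> v = (\<Sum>l\<in>L. \<alpha> l * \<phi> l v) + c * \<phi> l1 v"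
        using e by (simp add: algebra_simps)
      moreover have "(\<Sum>l\<in>insert l1 L. (\<alpha>(l1 := c)) l * \<phi> l v) = c * \<phi> l1 v + (\<Sum>l\<in>L. \<alpha> l * \<phi> l v)"
        using insert.hyps by (simp add: sum.insert) (rule sum.cong, auto)
      ultimately show "\<psi> v = (\<Sum>l\<in>insert l1 L. (\<alpha>(l1 := c)) l * \<phi> l v)" by simp
    qed
  qed
qed

lemma dim_ker:
  assumes V: "subspace V" "V \<subseteq> vec n" and fin: "finite L"
  shows "\<forall>l\<in>L. linear (\<phi> l) \<Longrightarrow> indep_on V \<phi> L \<Longrightarrow>
    dim {v \<in> V. \<forall>l\<in>L. \<phi> l v = 0} + card L = dim V"
  using fin
proof (induction L rule: finite_induct)
  case empty
  then show ?case by simp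
next
  case (insert l0 L)
  let ?K' = "{v \<in> V. \<forall>l\<in>L. \<phi> l v = 0}"
  have indL: "indep_on V \<phi> L"
    unfolding indep_on_def
  proof (intro allI impI ballI)
    fix \<alpha> l assume H: "\<forall>v\<in>V. (\<Sum>l\<in>L. \<alpha> l * \<phi> l v) = 0" and l: "l \<in> L"
    have "(\<Sum>l\<in>insert l0 L. (\<alpha>(l0 := 0)) l * \<phi> l v) = (\<Sum>l\<in>L. \<alpha> l * \<phi> l v)" for v
      using insert.hyps by (simp add: sum.insert) (rule sum.cong, auto)
    then have "\<forall>l\<in>insert l0 L. (\<alpha>(l0 := 0)) l = 0"
      using insert.prems(2) H unfolding indep_on_def by metis
    then have "(\<alpha>(l0 := 0)) l = 0" using l by blast
    moreover have "l \<noteq> l0" using l insert.hyps by blast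
    ultimately show "\<alpha> l = 0" by simp
  qed
  have IH: "dim ?K' + card L = dim V" using insert.IH insert.prems(1) indL by simp
  have subK': "subspace ?K'" using subspace_ker[OF V(1), of L \<phi>] insert.prems(1) by simp
  have lin0: "linear (\<phi> l0)" using insert.prems(1) by simp
  have "\<exists>u\<in>?K'. \<phi> l0 u \<noteq> 0"
  proof (rule ccontr)
    assume "\<not> ?thesis"
    then have "\<forall>v\<in>V. (\<forall>l\<in>L. \<phi> l v = 0) \<longrightarrow> \<phi> l0 v = 0" by auto
    then obtain \<alpha> where \<alpha>: "\<forall>v\<in>V. \<phi> l0 v = (\<Sum>l\<in>L. \<alpha> l * \<phi> l v)"
      using dual[OF insert.hyps(1) V(1), of \<phi> "\<phi> l0"] insert.prems(1) lin0 by auto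
    define \<beta> where "\<beta> = (\<lambda>l. - \<alpha> l)(l0 := 1)"
    have "(\<Sum>l\<in>insert l0 L. \<beta> l * \<phi> l v) = \<phi> l0 v - (\<Sum>l\<in>L. \<alpha> l * \<phi> l v)" for v
    proof -
      have "(\<Sum>l\<in>L. \<beta> l * \<phi> l v) = - (\<Sum>l\<in>L. \<alpha> l * \<phi> l v)"
        using insert.hyps by (simp add: \<beta>_def sum_negf[symmetric]) (rule sum.cong, auto)
      then show ?thesis using insert.hyps by (simp add: sum.insert \<beta>_def)
    qed
    then have "\<forall>v\<in>V. (\<Sum>l\<in>insert l0 L. \<beta> l * \<phi> l v) = 0" using \<alpha> by simp
    then have "\<beta> l0 = 0" using insert.prems(2) unfolding indep_on_def by blast
    then show False by (simp add: \<beta>_def)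
  qed
  then obtain u where u: "u \<in> ?K'" "\<phi> l0 u \<noteq> 0" by blast
  have "dim ?K' = dim {v \<in> ?K'. \<phi> l0 v = 0} + 1"
    by (rule dim_drop[OF subK' _ lin0 u]) (use V(2) in auto)
  moreover have "{v \<in> ?K'. \<phi> l0 v = 0} = {v \<in> V. \<forall>l\<in>insert l0 L. \<phi> l v = 0}" by auto
  ultimately show ?case using IH insert.hyps by simp
qed

lemma gen_at:
  assumes "generic W b d m" "1 \<le> i" "i \<le> m + 1" "J \<subseteq> {..<d i}"
  shows "(if card J \<le> d (i - 1) then vec (d (i - 1)) \<inter> (\<Inter>j\<in>J. hyp W b d i j) \<noteq> {}
            \<and> adim (vec (d (i - 1)) \<inter> (\<Inter>j\<in>J. hyp W b d i j)) = d (i - 1) - card J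
          else vec (d (i - 1)) \<inter> (\<Inter>j\<in>J. hyp W b d i j) = {})"
  using assms unfolding generic_def Let_def by blast

lemma diffset_vec: "{x - y | x y. x \<in> vec n \<and> y \<in> vec n} = vec n"
proof (intro set_eqI iffI)
  fix v assume "v \<in> {x - y | x y. x \<in> vec n \<and> y \<in> vec n}"
  then show "v \<in> vec n" using vec_diff by blast
next
  fix v assume v: "v \<in> vec n"
  have "(0::nat \<Rightarrow> real) \<in> vec n" by (simp add: vec_def)
  then have "v - 0 \<in> {x - y | x y. x \<in> vec n \<and> y \<in> vec n}" using v by blast
  then show "v \<in> {x - y | x y. x \<in> vec n \<and> y \<in> vec n}" by simp
qed

lemma dim_vec:
  assumes "generic W b d m" "1 \<le> i" "i \<le> m + 1"
  shows "dim (vec (d (i - 1))) = d (i - 1)"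
proof -
  have "adim (vec (d (i - 1))) = d (i - 1)"
    using gen_at[OF assms, of "{}"] by simp
  then show ?thesis by (simp add: adim_def diffset_vec)
qed

definition row :: "(nat \<Rightarrow> nat \<Rightarrow> nat \<Rightarrow> real) \<Rightarrow> (nat \<Rightarrow> nat \<Rightarrow> real) \<Rightarrow> (nat \<Rightarrow> nat)
    \<Rightarrow> nat \<Rightarrow> nat \<Rightarrow> (nat \<Rightarrow> real) \<Rightarrow> real" where
  "row W b d i j v = aff W b d i v j - aff W b d i 0 j"

lemma linear_row: "linear (row W b d i j)"
  unfolding row_def by (rule affc_linear[OF affc_aff_coord])

lemma rows_indep:
  assumes gen: "generic W b d m" and i: "1 \<le> i" "i \<le> m + 1" and x: "x \<in> vec (d (i - 1))"
  shows "indep_on (vec (d (i - 1))) (row W b d i) {j. j < d i \<and> aff W b d i x j = 0}"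
proof -
  define n where "n = d (i - 1)"
  define J where "J = {j. j < d i \<and> aff W b d i x j = 0}"
  have finJ: "finite J" by (simp add: J_def)
  define K where "K J' = {v \<in> vec n. \<forall>j\<in>J'. row W b d i j v = 0}" for J'
  have lin: "\<And>j. linear (row W b d i j)" by (rule linear_row)
  have dimK: "card J' \<le> n \<and> dim (K J') = n - card J'" if J': "J' \<subseteq> J" for J'
  proof -
    define S where "S = vec n \<inter> (\<Inter>j\<in>J'. hyp W b d i j)"
    have xS: "x \<in> S" using x J' by (auto simp: S_def hyp_def J_def n_def)
    have "J' \<subseteq> {..<d i}" using J' by (auto simp: J_def)
    from gen_at[OF gen i this] xS have c: "card J' \<le> n" and a: "adim S = n - card J'"
      by (auto simp: S_def n_def split: if_splits)
    have "{p - q | p q. p \<in> S \<and> q \<in> S} = K J'"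
    proof (intro set_eqI iffI)
      fix v assume "v \<in> {p - q | p q. p \<in> S \<and> q \<in> S}"
      then obtain p q where v: "v = p - q" "p \<in> S" "q \<in> S" by blast
      have "row W b d i j v = 0" if "j \<in> J'" for j
      proof -
        have "row W b d i j v = row W b d i j p - row W b d i j q" using v(1) linear_diff[OF lin] by simp
        then show ?thesis using v that by (auto simp: S_def hyp_def row_def)
      qed
      moreover have "v \<in> vec n" using v vec_diff by (auto simp: S_def)
      ultimately show "v \<in> K J'" by (simp add: K_def)
    next
      fix v assume v: "v \<in> K J'"
      have "x + v \<in> S"
      proof -
        have "x + v \<in> vec n" using x v by (simp add: K_def vec_def n_def)
        moreover have "aff W b d i (x + v) j = 0" if "j \<in> J'" for j
        proof -
          have "row W b d i j (x + v) = row W b d i j x + row W b d i j v" by (rule linear_add[OF lin])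
          then show ?thesis using v xS that by (auto simp: row_def K_def S_def hyp_def)
        qed
        ultimately show ?thesis by (auto simp: S_def hyp_def n_def)
      qed
      then have "(x + v) - x \<in> {p - q | p q. p \<in> S \<and> q \<in> S}" using xS by blast
      then show "v \<in> {p - q | p q. p \<in> S \<and> q \<in> S}" by simp
    qed
    then show ?thesis using c a by (simp add: adim_def)
  qed
  show ?thesis
    unfolding indep_on_def J_def[symmetric] n_def[symmetric]
  proof (intro allI impI ballI, rule ccontr)
    fix \<alpha> j0 assume H: "\<forall>v\<in>vec n. (\<Sum>j\<in>J. \<alpha> j * row W b d i j v) = 0" and j0: "j0 \<in> J" and ne: "\<alpha> j0 \<noteq> 0"
    define J' where "J' = J - {j0}"
    have "K J \<subseteq> K J'" by (auto simp: K_def J'_def)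
    moreover have "K J' \<subseteq> K J"
    proof
      fix v assume v: "v \<in> K J'"
      have "(\<Sum>j\<in>J. \<alpha> j * row W b d i j v) = \<alpha> j0 * row W b d i j0 v + (\<Sum>j\<in>J'. \<alpha> j * row W b d i j v)"
        unfolding J'_def using sum.remove[OF finJ j0] by simp
      also have "(\<Sum>j\<in>J'. \<alpha> j * row W b d i j v) = 0" using v by (simp add: K_def)
      finally have "\<alpha> j0 * row W b d i j0 v = 0" using H v by (simp add: K_def)
      then have "row W b d i j0 v = 0" using ne by simp
      then show "v \<in> K J" using v by (auto simp: K_def J'_def)
    qed
    ultimately have eq: "K J = K J'" by blast
    have "card J' = card J - 1" "card J \<ge> 1" using finJ j0 by (auto simp: J'_def card_gt_0_iff Suc_le_eq)
    moreover have "card J \<le> n" "dim (K J) = n - card J" using dimK[of J] by auto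
    moreover have "dim (K J') = n - card J'" using dimK[of J'] by (auto simp: J'_def)
    ultimately show False using eq by simp
  qed
qed

lemma comp_shift: "comp W b d a (Suc n) x = comp W b d (Suc a) n (layer W b d a x)"
  by (induction n) auto

lemma lcomp_shift: "lcomp W b d c a (Suc n) x = lcomp W b d c (Suc a) n (llayer W b d c a x)"
  by (induction n) auto

lemma lcomp_cong:
  "\<forall>l\<in>nds d a n. c l = c' l \<Longrightarrow> lcomp W b d c a n z = lcomp W b d c' a n z"
proof (induction n)
  case 0
  then show ?case by simp
next
  case (Suc n)
  have IH: "lcomp W b d c a n z = lcomp W b d c' a n z"
    using Suc by (auto simp: nds_def)
  show ?case
  proof
    fix j
    show "lcomp W b d c a (Suc n) z j = lcomp W b d c' a (Suc n) z j"
    proof (cases "j < d (a + n)")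
      case True
      then have "(a + n, j) \<in> nds d a (Suc n)" by (auto simp: nds_def)
      then show ?thesis using IH Suc.prems by (auto simp: llayer_def)
    next
      case False
      then show ?thesis using IH by (auto simp: llayer_def aff_def)
    qed
  qed
qed

lemma Pc_cong: "\<forall>l\<in>nds d a k. c l = c' l \<Longrightarrow> Pc W b d c a k = Pc W b d c' a k"
  unfolding Pc_nds by auto

definition phi :: "(nat \<Rightarrow> nat \<Rightarrow> nat \<Rightarrow> real) \<Rightarrow> (nat \<Rightarrow> nat \<Rightarrow> real) \<Rightarrow> (nat \<Rightarrow> nat)
    \<Rightarrow> (nat \<times> nat \<Rightarrow> int) \<Rightarrow> nat \<Rightarrow> nat \<times> nat \<Rightarrow> (nat \<Rightarrow> real) \<Rightarrow> real" where
  "phi W b d c a l v = gnode W b d c a l v - gnode W b d c a l 0"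

lemma linear_phi: "linear (phi W b d c a l)"
  unfolding phi_def by (rule affc_linear[OF affc_gnode])

definition Zs :: "(nat \<Rightarrow> nat \<Rightarrow> nat \<Rightarrow> real) \<Rightarrow> (nat \<Rightarrow> nat \<Rightarrow> real) \<Rightarrow> (nat \<Rightarrow> nat)
    \<Rightarrow> nat \<Rightarrow> nat \<Rightarrow> (nat \<Rightarrow> real) \<Rightarrow> (nat \<times> nat) set" where
  "Zs W b d a k y = {l \<in> nds d a k. vpat W b d a k y l = 0}"

lemma nds_Suc: "nds d a (Suc k) = (\<lambda>j. (a, j)) ` {..<d a} \<union> nds d (Suc a) k"
proof (intro set_eqI iffI)
  fix l assume "l \<in> nds d a (Suc k)"
  then obtain i j where l: "l = (i, j)" "a \<le> i" "i < Suc (a + k)" "j < d i" by (auto simp: nds_def)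
  show "l \<in> (\<lambda>j. (a, j)) ` {..<d a} \<union> nds d (Suc a) k"
  proof (cases "i = a")
    case True
    then show ?thesis using l by auto
  next
    case False
    then show ?thesis using l by (auto simp: nds_def)
  qed
next
  fix l assume "l \<in> (\<lambda>j. (a, j)) ` {..<d a} \<union> nds d (Suc a) k"
  then show "l \<in> nds d a (Suc k)" by (auto simp: nds_def)
qed

lemma nds_disj: "(\<lambda>j. (a, j)) ` {..<d a} \<inter> nds d (Suc a) k = {}"
  by (auto simp: nds_def)

lemma anode_shift:
  assumes "l \<in> nds d (Suc a) k"
  shows "anode W b d a l x = anode W b d (Suc a) l (layer W b d a x)"
proof -
  obtain i j where l: "l = (i, j)" "Suc a \<le> i" by (cases l) (use assms in \<open>auto simp: nds_def\<close>)
  then have "i - a = Suc (i - Suc a)" by simp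
  then have "comp W b d a (i - a) x = comp W b d (Suc a) (i - Suc a) (layer W b d a x)"
    using comp_shift by metis
  then show ?thesis using l by (simp add: anode_def)
qed

lemma vpat_shift:
  assumes "l \<in> nds d (Suc a) k"
  shows "vpat W b d a (Suc k) x l = vpat W b d (Suc a) k (layer W b d a x) l"
proof -
  have "l \<in> nds d a (Suc k)" using assms by (auto simp: nds_def)
  then show ?thesis using assms by (simp add: vpat_nds anode_shift)
qed

lemma anode_first: "anode W b d a (a, j) x = aff W b d a x j"
  by (simp add: anode_def)

lemma gnode_first: "gnode W b d c a (a, j) v = aff W b d a v j"
  by (simp add: gnode_def)

lemma phi_first: "phi W b d c a (a, j) v = row W b d a j v"
  by (simp add: phi_def gnode_first row_def)

lemma gnode_shift:
  assumes "l \<in> nds d (Suc a) k" "\<forall>l\<in>nds d (Suc a) k. c l = c' l"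
  shows "gnode W b d c a l v = gnode W b d c' (Suc a) l (llayer W b d c a v)"
proof -
  obtain i j where l: "l = (i, j)" "Suc a \<le> i" "i < Suc a + k" by (cases l) (use assms in \<open>auto simp: nds_def\<close>)
  then have e: "i - a = Suc (i - Suc a)" by simp
  have "\<forall>l\<in>nds d (Suc a) (i - Suc a). c l = c' l" using assms(2) l by (auto simp: nds_def)
  then have "lcomp W b d c (Suc a) (i - Suc a) z = lcomp W b d c' (Suc a) (i - Suc a) z" for z
    by (rule lcomp_cong)
  moreover have "lcomp W b d c a (i - a) v = lcomp W b d c (Suc a) (i - Suc a) (llayer W b d c a v)"
    using e lcomp_shift by metis
  ultimately show ?thesis using l by (simp add: gnode_def)
qed

lemma phi_shift:
  assumes "l \<in> nds d (Suc a) k" "\<forall>l\<in>nds d (Suc a) k. c l = c' l"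
  shows "phi W b d c a l v = phi W b d c' (Suc a) l (llayer W b d c a v - llayer W b d c a 0)"
proof -
  let ?G = "gnode W b d c' (Suc a) l" and ?L = "llayer W b d c a"
  have lin: "linear (phi W b d c' (Suc a) l)" by (rule linear_phi)
  have "phi W b d c a l v = ?G (?L v) - ?G (?L 0)"
    using gnode_shift[OF assms] by (simp add: phi_def)
  also have "\<dots> = phi W b d c' (Suc a) l (?L v) - phi W b d c' (Suc a) l (?L 0)"
    by (simp add: phi_def)
  also have "\<dots> = phi W b d c' (Suc a) l (?L v - ?L 0)"
    by (simp add: linear_diff[OF lin])
  finally show ?thesis .
qed

lemma lin_vanish_span:
  assumes "linear (\<psi> :: (nat \<Rightarrow> real) \<Rightarrow> real)" "\<forall>g\<in>G. \<psi> g = 0" "v \<in> span G"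
  shows "\<psi> v = 0"
proof -
  have "subspace {v. \<psi> v = 0}"
    using subspace_ker[OF subspace_UNIV, of "{()}" "\<lambda>_. \<psi>"] assms(1) by simp
  then show ?thesis using span_subspace_induct[OF assms(3), of "{v. \<psi> v = 0}"] assms(2) by blast
qed

lemma linear_sum_phi: "linear (\<lambda>w. \<Sum>l\<in>L. \<beta> l * phi W b d c a l w)"
proof (rule linearI)
  fix x y
  show "(\<Sum>l\<in>L. \<beta> l * phi W b d c a l (x + y)) = (\<Sum>l\<in>L. \<beta> l * phi W b d c a l x) + (\<Sum>l\<in>L. \<beta> l * phi W b d c a l y)"
    by (simp add: linear_add[OF linear_phi] distrib_left sum.distrib)
next
  fix r x
  show "(\<Sum>l\<in>L. \<beta> l * phi W b d c a l (r *\<^sub>R x)) = r *\<^sub>R (\<Sum>l\<in>L. \<beta> l * phi W b d c a l x)"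
    by (simp add: linear_scale[OF linear_phi] sum_distrib_left algebra_simps)
qed

lemma IND:
  assumes gen: "generic W b d m" and st: "supertransversal W b d m"
  shows "a + k = m + 2 \<Longrightarrow> 1 \<le> a \<Longrightarrow> x \<in> vec (d (a - 1)) \<Longrightarrow>
    indep_on (vec (d (a - 1))) (phi W b d (vpat W b d a k x) a) (Zs W b d a k x)"
proof (induction k arbitrary: a x)
  case 0
  then show ?case by (simp add: indep_on_def Zs_def nds_def)
next
  case (Suc k)
  note a = Suc.prems(1,2) and x = Suc.prems(3)
  define \<sigma> where "\<sigma> = vpat W b d a (Suc k) x"
  define y where "y = layer W b d a x"
  define \<sigma>' where "\<sigma>' = vpat W b d (Suc a) k y"
  define J where "J = {j. j < d a \<and> aff W b d a x j = 0}"
  define Z' where "Z' = Zs W b d (Suc a) k y"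
  define L where "L = llayer W b d \<sigma> a"
  define M where "M v = L v - L 0" for v
  define TC where "TC = {v \<in> vec (d (a - 1)). \<forall>j\<in>J. row W b d a j v = 0}"
  have am: "a \<le> m + 1" using a by simp
  have yvec: "y \<in> vec (d a)" using comp_vec[of x d a W b 1] x by (simp add: y_def)
  have agree: "\<forall>l\<in>nds d (Suc a) k. \<sigma> l = \<sigma>' l"
    using vpat_shift by (simp add: \<sigma>_def \<sigma>'_def y_def)
  have finZ': "finite Z'" using finite_nds by (simp add: Z'_def Zs_def)
  have finJ: "finite J" by (simp add: J_def)
  have Z'nds: "Z' \<subseteq> nds d (Suc a) k" by (auto simp: Z'_def Zs_def)
  have Zsplit: "Zs W b d a (Suc k) x = (\<lambda>j. (a, j)) ` J \<union> Z'"
  proof (intro set_eqI iffI)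
    fix l assume l: "l \<in> Zs W b d a (Suc k) x"
    then have "l \<in> (\<lambda>j. (a, j)) ` {..<d a} \<union> nds d (Suc a) k" by (simp add: Zs_def nds_Suc)
    then show "l \<in> (\<lambda>j. (a, j)) ` J \<union> Z'"
    proof
      assume "l \<in> (\<lambda>j. (a, j)) ` {..<d a}"
      then obtain j where j: "l = (a, j)" "j < d a" by auto
      then have "(a, j) \<in> nds d a (Suc k)" by (simp add: nds_def)
      then have "aff W b d a x j = 0" using l j by (simp add: Zs_def vpat_nds anode_first)
      then show ?thesis using j by (simp add: J_def)
    next
      assume l': "l \<in> nds d (Suc a) k"
      then have "vpat W b d (Suc a) k y l = 0" using l vpat_shift[OF l'] by (simp add: Zs_def y_def)
      then show ?thesis using l' by (simp add: Z'_def Zs_def)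
    qed
  next
    fix l assume "l \<in> (\<lambda>j. (a, j)) ` J \<union> Z'"
    then show "l \<in> Zs W b d a (Suc k) x"
    proof
      assume "l \<in> (\<lambda>j. (a, j)) ` J"
      then obtain j where j: "l = (a, j)" "j < d a" "aff W b d a x j = 0" by (auto simp: J_def)
      then have "(a, j) \<in> nds d a (Suc k)" by (simp add: nds_def)
      then show ?thesis using j by (simp add: Zs_def vpat_nds anode_first)
    next
      assume l: "l \<in> Z'"
      then have l': "l \<in> nds d (Suc a) k" using Z'nds by blast
      then have "l \<in> nds d a (Suc k)" by (auto simp: nds_def)
      then show ?thesis using l vpat_shift[OF l'] by (simp add: Zs_def Z'_def y_def)
    qed
  qed
  have disj: "(\<lambda>j. (a, j)) ` J \<inter> Z' = {}" using Z'nds by (auto simp: nds_def)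
  have inj: "inj_on (\<lambda>j. (a, j)) J" by (auto simp: inj_on_def)
  have phiZ': "phi W b d \<sigma> a l v = phi W b d \<sigma>' (Suc a) l (M v)" if "l \<in> Z'" for l v
  proof -
    have "l \<in> nds d (Suc a) k" using that Z'nds by blast
    from phi_shift[where l=l and c=\<sigma> and c'=\<sigma>' and W=W and b=b and v=v and d=d and a=a and k=k, OF this agree]
    show ?thesis by (simp add: M_def L_def)
  qed
  have IH: "indep_on (vec (d a)) (phi W b d \<sigma>' (Suc a)) Z'"
    using Suc.IH[of "Suc a" y] a yvec by (simp add: \<sigma>'_def Z'_def)
  have deep: "\<forall>l\<in>Z'. \<beta> l = 0"
    if H: "\<forall>v\<in>TC. (\<Sum>l\<in>Z'. \<beta> l * phi W b d \<sigma>' (Suc a) l (M v)) = 0" for \<beta>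
  proof (cases "Z' = {}")
    case True
    then show ?thesis by simp
  next
    case False
    then have "k \<noteq> 0" by (auto simp: Z'_def Zs_def nds_def)
    then have am': "a \<le> m" using a by simp
    define C1 where "C1 = Pc W b d \<sigma> a 1"
    define D where "D = Pc W b d \<sigma>' (Suc a) k"
    have ok\<sigma>: "okpat d a (Suc k) \<sigma>" by (simp add: \<sigma>_def okpat_vpat)
    have ok1: "okpat d a 1 \<sigma>" using okpat_mono[OF ok\<sigma>] by simp
    have ok\<sigma>': "okpat d (Suc a) k \<sigma>'" by (simp add: \<sigma>'_def okpat_vpat)
    have "\<forall>l\<in>nds d a 1. vpat W b d a 1 x l = \<sigma> l"
    proof
      fix l assume l: "l \<in> nds d a 1"
      then have "l \<in> nds d a (Suc k)" by (auto simp: nds_def)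
      then show "vpat W b d a 1 x l = \<sigma> l" using l by (simp add: \<sigma>_def vpat_nds)
    qed
    then have "Pc W b d (vpat W b d a 1 x) a 1 = C1" unfolding C1_def by (rule Pc_cong)
    then have C1_ri: "x \<in> rel_interior C1" using RI[of x d a W b 1] x by simp
    then have xC1: "x \<in> C1" using rel_interior_subset by blast
    have C1eq: "C1 = {z \<in> vec (d (a - 1)). \<forall>j<d a.
            ((\<lambda>j. \<sigma> (a, j)) j = 1 \<longrightarrow> aff W b d a z j \<ge> 0) \<and>
            ((\<lambda>j. \<sigma> (a, j)) j = -1 \<longrightarrow> aff W b d a z j \<le> 0) \<and>
            ((\<lambda>j. \<sigma> (a, j)) j = 0 \<longrightarrow> aff W b d a z j = 0)}"
      by (auto simp: C1_def Pc_def wk_def)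
    have rng: "\<forall>j<d a. (\<lambda>j. \<sigma> (a, j)) j \<in> {-1, 0, 1}" using ok1 by (simp add: okpat_def)
    have C1R: "C1 \<in> Rcx W b d a"
      unfolding Rcx_def mem_Collect_eq
    proof (intro conjI exI[of _ "\<lambda>j. \<sigma> (a, j)"])
      show "C1 \<noteq> {}" using xC1 by blast
      show "\<forall>j<d a. \<sigma> (a, j) \<in> {-1, 0, 1}" using rng by simp
      show "C1 = {z \<in> vec (d (a - 1)). \<forall>j<d a.
            (\<sigma> (a, j) = 1 \<longrightarrow> aff W b d a z j \<ge> 0) \<and>
            (\<sigma> (a, j) = -1 \<longrightarrow> aff W b d a z j \<le> 0) \<and>
            (\<sigma> (a, j) = 0 \<longrightarrow> aff W b d a z j = 0)}" using C1eq by simp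
    qed
    have "m + 1 - a = k" using a by simp
    moreover have "y \<in> Pc W b d \<sigma>' (Suc a) k" using vec_in_Pc[of y d "Suc a" W b k] yvec by (simp add: \<sigma>'_def)
    ultimately have DC: "D \<in> canon W b d (a + 1) (m + 1 - a)"
      using ok\<sigma>' by (auto simp: canon_char D_def)
    have yD: "y \<in> rel_interior D" using RI[of y d "Suc a" W b k] yvec by (simp add: D_def \<sigma>'_def)
    have "1 \<le> a \<and> a \<le> m" using a(2) am' by simp
    then have "\<forall>C\<in>Rcx W b d a. \<forall>D\<in>canon W b d (a + 1) (m + 1 - a). transverse_on (layer W b d a) C D (d a)"
      using st unfolding supertransversal_def by blast
    then have "transverse_on (layer W b d a) C1 D (d a)" using C1R DC by blast
    then have span_eq: "span ({layer W b d a z - layer W b d a x | z. z \<in> C1} \<union> {z - w | z w. z \<in> D \<and> w \<in> D}) = vec (d a)"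
      using C1_ri yD unfolding transverse_on_def y_def by blast
    define \<psi> where "\<psi> w = (\<Sum>l\<in>Z'. \<beta> l * phi W b d \<sigma>' (Suc a) l w)" for w
    have lin\<psi>: "linear \<psi>" unfolding \<psi>_def by (rule linear_sum_phi)
    have linM: "linear M" unfolding M_def L_def by (rule affc_linear[OF affc_llayer])
    have layerL: "layer W b d a z = L z" if "z \<in> C1" for z
      using Pc_comp_lcomp[OF ok1 that[unfolded C1_def], of 1] by (simp add: L_def)
    have G1: "\<psi> (layer W b d a z - layer W b d a x) = 0" if z: "z \<in> C1" for z
    proof -
      have "layer W b d a z - layer W b d a x = L z - L x" using layerL z xC1 by simp
      also have "\<dots> = M (z - x)" using linear_diff[OF linM, of z x] by (simp add: M_def)
      finally have e: "layer W b d a z - layer W b d a x = M (z - x)" .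
      have "z - x \<in> TC"
      proof -
        have zv: "z \<in> vec (d (a - 1))" using z by (simp add: C1_def Pc_def)
        have "row W b d a j (z - x) = 0" if j: "j \<in> J" for j
        proof -
          have j': "j < d a" "aff W b d a x j = 0" using j by (auto simp: J_def)
          then have "(a, j) \<in> nds d a (Suc k)" by (simp add: nds_def)
          then have "\<sigma> (a, j) = 0" using j' by (simp add: \<sigma>_def vpat_nds anode_first)
          then have "aff W b d a z j = 0" using z j'(1) by (auto simp: C1_def Pc_def wk_def)
          moreover have "row W b d a j (z - x) = row W b d a j z - row W b d a j x"
            by (rule linear_diff[OF linear_row])
          ultimately show ?thesis using j' by (simp add: row_def)
        qed
        then show ?thesis using zv x vec_diff by (simp add: TC_def)
      qed
      then show ?thesis using H e by (simp add: \<psi>_def)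
    qed
    have G2: "\<psi> (z - w) = 0" if zw: "z \<in> D" "w \<in> D" for z w
    proof -
      have "phi W b d \<sigma>' (Suc a) l (z - w) = 0" if l: "l \<in> Z'" for l
      proof -
        have ln: "l \<in> nds d (Suc a) k" "\<sigma>' l = 0" using l by (auto simp: Z'_def Zs_def \<sigma>'_def)
        have "gnode W b d \<sigma>' (Suc a) l u = 0" if u: "u \<in> D" for u
        proof -
          have "wk (\<sigma>' l) (anode W b d (Suc a) l u)" using u ln(1) by (simp add: D_def Pc_nds)
          then have "anode W b d (Suc a) l u = 0" using ln(2) by (simp add: wk_def)
          then show ?thesis using anode_gnode[OF ok\<sigma>' u[unfolded D_def] ln(1)] by simp
        qed
        then have "gnode W b d \<sigma>' (Suc a) l z = 0" "gnode W b d \<sigma>' (Suc a) l w = 0" using zw by auto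
        moreover have "phi W b d \<sigma>' (Suc a) l (z - w) = phi W b d \<sigma>' (Suc a) l z - phi W b d \<sigma>' (Suc a) l w"
          by (rule linear_diff[OF linear_phi])
        ultimately show ?thesis by (simp add: phi_def)
      qed
      then show ?thesis by (simp add: \<psi>_def)
    qed
    have allG: "\<forall>g\<in>{layer W b d a z - layer W b d a x | z. z \<in> C1} \<union> {z - w | z w. z \<in> D \<and> w \<in> D}. \<psi> g = 0"
      using G1 G2 by blast
    have "\<forall>v\<in>vec (d a). \<psi> v = 0"
    proof
      fix v assume "v \<in> vec (d a)"
      then have "v \<in> span ({layer W b d a z - layer W b d a x | z. z \<in> C1} \<union> {z - w | z w. z \<in> D \<and> w \<in> D})"
        using span_eq by simp
      then show "\<psi> v = 0" by (rule lin_vanish_span[OF lin\<psi> allG])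
    qed
    then show ?thesis using IH unfolding indep_on_def \<psi>_def by blast
  qed
  show ?case
    unfolding indep_on_def \<sigma>_def[symmetric]
  proof (intro allI impI)
    fix \<alpha> assume H: "\<forall>v\<in>vec (d (a - 1)). (\<Sum>l\<in>Zs W b d a (Suc k) x. \<alpha> l * phi W b d \<sigma> a l v) = 0"
    have sumsplit: "(\<Sum>l\<in>Zs W b d a (Suc k) x. \<alpha> l * phi W b d \<sigma> a l v)
        = (\<Sum>j\<in>J. \<alpha> (a, j) * row W b d a j v) + (\<Sum>l\<in>Z'. \<alpha> l * phi W b d \<sigma>' (Suc a) l (M v))" for v
    proof -
      have "(\<Sum>l\<in>Zs W b d a (Suc k) x. \<alpha> l * phi W b d \<sigma> a l v)
          = (\<Sum>l\<in>(\<lambda>j. (a, j)) ` J. \<alpha> l * phi W b d \<sigma> a l v) + (\<Sum>l\<in>Z'. \<alpha> l * phi W b d \<sigma> a l v)"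
        unfolding Zsplit using finJ finZ' disj by (simp add: sum.union_disjoint)
      also have "(\<Sum>l\<in>(\<lambda>j. (a, j)) ` J. \<alpha> l * phi W b d \<sigma> a l v) = (\<Sum>j\<in>J. \<alpha> (a, j) * row W b d a j v)"
        by (simp add: sum.reindex[OF inj] phi_first)
      also have "(\<Sum>l\<in>Z'. \<alpha> l * phi W b d \<sigma> a l v) = (\<Sum>l\<in>Z'. \<alpha> l * phi W b d \<sigma>' (Suc a) l (M v))"
        by (rule sum.cong) (simp_all add: phiZ')
      finally show ?thesis .
    qed
    have Z'0: "\<forall>l\<in>Z'. \<alpha> l = 0"
    proof (rule deep)
      show "\<forall>v\<in>TC. (\<Sum>l\<in>Z'. \<alpha> l * phi W b d \<sigma>' (Suc a) l (M v)) = 0"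
      proof
        fix v assume v: "v \<in> TC"
        then have "(\<Sum>j\<in>J. \<alpha> (a, j) * row W b d a j v) = 0" by (simp add: TC_def)
        then show "(\<Sum>l\<in>Z'. \<alpha> l * phi W b d \<sigma>' (Suc a) l (M v)) = 0"
          using H v sumsplit[of v] by (simp add: TC_def)
      qed
    qed
    then have "\<forall>v\<in>vec (d (a - 1)). (\<Sum>j\<in>J. \<alpha> (a, j) * row W b d a j v) = 0"
      using H sumsplit by simp
    then have J0: "\<forall>j\<in>J. \<alpha> (a, j) = 0"
      using rows_indep[OF gen a(2) am x, unfolded indep_on_def, rule_format, of "\<lambda>j. \<alpha> (a, j)"]
      unfolding J_def by blast
    show "\<forall>l\<in>Zs W b d a (Suc k) x. \<alpha> l = 0" using Z'0 J0 unfolding Zsplit by blast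
  qed
qed

lemma nodes_nds: "nodes d m = nds d 1 (m + 1)"
  by (auto simp: nodes_def nds_def)

lemma sgn_sgi: "sgn v = real_of_int (sgi v)"
  by (simp add: sgi_def sgn_if)

lemma signseq_eq: "signseq W b d m C = (\<lambda>l. real_of_int (vpat W b d 1 (m + 1) (SOME x. x \<in> rel_interior C) l))"
proof
  fix l
  obtain i j :: nat where l: "l = (i, j)" by (cases l)
  show "signseq W b d m C l = real_of_int (vpat W b d 1 (m + 1) (SOME x. x \<in> rel_interior C) l)"
  proof (cases "l \<in> nodes d m")
    case True
    then have "l \<in> nds d 1 (m + 1)" by (simp add: nodes_nds)
    then show ?thesis using True l
      by (simp add: signseq_def vpat_nds node_def anode_def sgn_sgi)
  next
    case False
    then have "l \<notin> nds d 1 (m + 1)" by (simp add: nodes_nds)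
    then show ?thesis using False l by (simp add: signseq_def vpat_out)
  qed
qed

lemma cell_facts:
  assumes E: "E \<in> canon W b d 1 (m + 1)"
  defines "x \<equiv> SOME x. x \<in> rel_interior E"
  shows "x \<in> rel_interior E" "x \<in> E" "x \<in> vec (d 0)"
    "Pc W b d (vpat W b d 1 (m + 1) x) 1 (m + 1) = E"
proof -
  obtain c where ok: "okpat d 1 (m + 1) c" and Ec: "E = Pc W b d c 1 (m + 1)" and ne: "E \<noteq> {}"
    using E by (auto simp: canon_char)
  obtain x0 where x0: "x0 \<in> E" "Pc W b d (vpat W b d 1 (m + 1) x0) 1 (m + 1) = E"
    using exists_gen[OF ok] ne Ec by blast
  have "x0 \<in> vec (d 0)" using x0(1) Ec by (simp add: Pc_def)
  then have "x0 \<in> rel_interior E" using RI[of x0 d 1 W b "m + 1"] x0(2) by simp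
  then show xri: "x \<in> rel_interior E" unfolding x_def by (rule someI[of "\<lambda>x. x \<in> rel_interior E" x0])
  then show xE: "x \<in> E" using rel_interior_subset by blast
  then show "x \<in> vec (d 0)" using Ec by (simp add: Pc_def)
  show "Pc W b d (vpat W b d 1 (m + 1) x) 1 (m + 1) = E"
    using cellpat[OF ok] xri Ec by simp
qed

lemma sign_step:
  assumes g: "g \<noteq> 0" and t: "0 < t" "t \<le> \<bar>g\<bar> / (\<bar>p\<bar> + 1)"
  shows "wk (sgi g) (g + t * p)"
proof -
  have "t * (\<bar>p\<bar> + 1) \<le> \<bar>g\<bar>" using t(2) by (simp add: pos_le_divide_eq add_pos_nonneg)
  then have "t * \<bar>p\<bar> < \<bar>g\<bar>" using t(1) by (simp add: algebra_simps)
  moreover have "\<bar>t * p\<bar> = t * \<bar>p\<bar>" using t(1) by (simp add: abs_mult)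
  ultimately have "\<bar>t * p\<bar> < \<bar>g\<bar>" by simp
  then show ?thesis using g by (auto simp: wk_def sgi_def abs_if split: if_splits)
qed

lemma gnode_line: "gnode W b d c a l (x + t *\<^sub>R v) = gnode W b d c a l x + t * phi W b d c a l v"
proof -
  have lin: "linear (phi W b d c a l)" by (rule linear_phi)
  have "phi W b d c a l (x + t *\<^sub>R v) = phi W b d c a l x + t * phi W b d c a l v"
    by (simp add: linear_add[OF lin] linear_scale[OF lin])
  then show ?thesis by (simp add: phi_def)
qed

lemma cell_dim:
  assumes gen: "generic W b d m" and st: "supertransversal W b d m"
    and E: "E \<in> canon W b d 1 (m + 1)"
  defines "x \<equiv> SOME x. x \<in> rel_interior E"
  shows "adim E + card (Zs W b d 1 (m + 1) x) = d 0"
proof -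
  note cf = cell_facts[OF E, folded x_def]
  define \<sigma> where "\<sigma> = vpat W b d 1 (m + 1) x"
  define Z where "Z = Zs W b d 1 (m + 1) x"
  define K where "K = {v \<in> vec (d 0). \<forall>l\<in>Z. phi W b d \<sigma> 1 l v = 0}"
  have ok: "okpat d 1 (m + 1) \<sigma>" by (simp add: \<sigma>_def okpat_vpat)
  have EP: "E = Pc W b d \<sigma> 1 (m + 1)" using cf(4) by (simp add: \<sigma>_def)
  have finZ: "finite Z" using finite_nds by (simp add: Z_def Zs_def)
  have Zn: "Z = {l \<in> nds d 1 (m + 1). \<sigma> l = 0}" by (simp add: Z_def Zs_def \<sigma>_def)
  have ind: "indep_on (vec (d 0)) (phi W b d \<sigma> 1) Z"
    using IND[OF gen st, of 1 "m + 1" x] cf(3) by (simp add: \<sigma>_def Z_def)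
  have dimK: "dim K + card Z = dim (vec (d 0))"
    using dim_ker[OF subspace_vec order_refl finZ, of "phi W b d \<sigma> 1"] linear_phi ind
    by (simp add: K_def)
  have dv: "dim (vec (d 0)) = d 0" using dim_vec[OF gen, of 1] by simp
  have gz: "gnode W b d \<sigma> 1 l u = 0" if "u \<in> E" "l \<in> Z" for u l
  proof -
    have ln: "l \<in> nds d 1 (m + 1)" "\<sigma> l = 0" using that(2) Zn by auto
    have "wk (\<sigma> l) (anode W b d 1 l u)" using that(1) ln(1) EP by (simp add: Pc_nds)
    then have "anode W b d 1 l u = 0" using ln(2) by (simp add: wk_def)
    then show ?thesis using anode_gnode[OF ok _ ln(1)] that(1) EP by simp
  qed
  define S where "S = {p - q | p q. p \<in> E \<and> q \<in> E}"
  have SK: "S \<subseteq> K"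
  proof
    fix v assume "v \<in> S"
    then obtain p q where v: "v = p - q" "p \<in> E" "q \<in> E" by (auto simp: S_def)
    have "v \<in> vec (d 0)" using v EP vec_diff by (auto simp: Pc_def)
    moreover have "phi W b d \<sigma> 1 l v = 0" if "l \<in> Z" for l
    proof -
      have "phi W b d \<sigma> 1 l v = phi W b d \<sigma> 1 l p - phi W b d \<sigma> 1 l q"
        using v(1) linear_diff[OF linear_phi] by simp
      then show ?thesis using gz[OF v(2) that] gz[OF v(3) that] by (simp add: phi_def)
    qed
    ultimately show "v \<in> K" by (simp add: K_def)
  qed
  have KS: "K \<subseteq> span S"
  proof
    fix v assume v: "v \<in> K"
    define NZ where "NZ = {l \<in> nds d 1 (m + 1). \<sigma> l \<noteq> 0}"
    have finNZ: "finite NZ" using finite_nds by (simp add: NZ_def)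
    define t where "t = Min (insert 1 ((\<lambda>l. \<bar>gnode W b d \<sigma> 1 l x\<bar> / (\<bar>phi W b d \<sigma> 1 l v\<bar> + 1)) ` NZ))"
    have gx: "gnode W b d \<sigma> 1 l x = anode W b d 1 l x" if "l \<in> nds d 1 (m + 1)" for l
      using anode_gnode[OF ok _ that] cf(2) EP by simp
    have sx: "\<sigma> l = sgi (anode W b d 1 l x)" if "l \<in> nds d 1 (m + 1)" for l
      using that by (simp add: \<sigma>_def vpat_nds)
    have pos: "0 < \<bar>gnode W b d \<sigma> 1 l x\<bar> / (\<bar>phi W b d \<sigma> 1 l v\<bar> + 1)" if "l \<in> NZ" for l
    proof -
      have "l \<in> nds d 1 (m + 1)" "\<sigma> l \<noteq> 0" using that by (auto simp: NZ_def)
      then have "gnode W b d \<sigma> 1 l x \<noteq> 0" using gx sx by (auto simp: sgi_def)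
      then show ?thesis by (simp add: add_pos_nonneg)
    qed
    have t0: "0 < t" unfolding t_def using finNZ pos by (subst Min_gr_iff) auto
    have tle: "t \<le> \<bar>gnode W b d \<sigma> 1 l x\<bar> / (\<bar>phi W b d \<sigma> 1 l v\<bar> + 1)" if "l \<in> NZ" for l
      unfolding t_def using finNZ that by (intro Min_le) auto
    define z where "z = x + t *\<^sub>R v"
    have zE: "z \<in> E"
    proof -
      have "z \<in> vec (d 0)" using cf(3) v by (simp add: z_def K_def vec_def)
      moreover have "wk (\<sigma> l) (gnode W b d \<sigma> 1 l z)" if l: "l \<in> nds d 1 (m + 1)" for l
      proof (cases "\<sigma> l = 0")
        case True
        then have "l \<in> Z" using l Zn by simp
        then have "phi W b d \<sigma> 1 l v = 0" "gnode W b d \<sigma> 1 l x = 0" using v gz[OF cf(2)] by (auto simp: K_def)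
        then show ?thesis by (simp add: z_def gnode_line)
      next
        case False
        then have lNZ: "l \<in> NZ" using l by (simp add: NZ_def)
        have "gnode W b d \<sigma> 1 l x \<noteq> 0" using False gx[OF l] sx[OF l] by (auto simp: sgi_def)
        from sign_step[OF this t0 tle[OF lNZ]]
        show ?thesis using sx[OF l] gx[OF l] by (simp add: z_def gnode_line)
      qed
      ultimately have "z \<in> Pc W b d \<sigma> 1 (m + 1)" unfolding Pc_lin_nds[OF ok] by simp
      then show ?thesis using EP by simp
    qed
    have "z - x \<in> S" using zE cf(2) by (auto simp: S_def)
    then have "(1 / t) *\<^sub>R (z - x) \<in> span S" by (intro span_scale span_base)
    moreover have "(1 / t) *\<^sub>R (z - x) = v" using t0 by (simp add: z_def)
    ultimately show "v \<in> span S" by simp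
  qed
  have subK: "subspace K"
    using subspace_ker[OF subspace_vec, of Z "phi W b d \<sigma> 1"] linear_phi by (simp add: K_def)
  have "span S = K" by (rule span_subspace[OF SK KS subK])
  have "adim E = dim S" by (simp add: adim_def S_def)
  also have "\<dots> = dim (span S)" by (rule dim_span[symmetric])
  also have "\<dots> = dim K" using \<open>span S = K\<close> by simp
  finally have "adim E = dim K" .
  then show ?thesis using dimK dv by (simp add: Z_def)
qed

lemma cube_sub:
  assumes "\<forall>l\<in>N. \<sigma> l \<in> {-1, 0, 1}"
  shows "cube_face N \<sigma> \<subseteq> cube_face N \<tau> \<longleftrightarrow> (\<forall>l\<in>N. \<tau> l \<noteq> 0 \<longrightarrow> \<sigma> l = \<tau> l)"
proof
  assume H: "cube_face N \<sigma> \<subseteq> cube_face N \<tau>"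
  define p where "p l = (if l \<in> N then \<sigma> l else 0)" for l
  have "p \<in> cube_face N \<sigma>" using assms by (auto simp: cube_face_def p_def)
  then have "p \<in> cube_face N \<tau>" using H by blast
  then show "\<forall>l\<in>N. \<tau> l \<noteq> 0 \<longrightarrow> \<sigma> l = \<tau> l" by (auto simp: cube_face_def p_def)
next
  assume "\<forall>l\<in>N. \<tau> l \<noteq> 0 \<longrightarrow> \<sigma> l = \<tau> l"
  then show "cube_face N \<sigma> \<subseteq> cube_face N \<tau>" by (auto simp: cube_face_def)
qed

lemma wk_sgi_eq: "c \<in> {-1, 0, 1} \<Longrightarrow> wk c v \<Longrightarrow> sgi v \<noteq> 0 \<Longrightarrow> c = sgi v"
  by (cases "v > 0"; cases "v < 0") (auto simp: wk_def sgi_def)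

theorem lemma21:
  fixes W :: "nat \<Rightarrow> nat \<Rightarrow> nat \<Rightarrow> real" and b :: "nat \<Rightarrow> nat \<Rightarrow> real"
    and d :: "nat \<Rightarrow> nat" and m :: nat
  defines "CF \<equiv> canon W b d 1 (m + 1)"
      and "s \<equiv> signseq W b d m"
      and "Q \<equiv> cube_face (nodes d m)"
  assumes m: "1 \<le> m"
    and widths: "\<forall>i\<le>m. 0 < d i" and out: "d (m + 1) = 1"
    and first: "d 0 \<le> d 1"
    and gen: "generic W b d m"
    and st: "supertransversal W b d m"
  shows "bij_betw (\<lambda>C. Q (s C)) CF ((\<lambda>C. Q (s C)) ` CF)
    \<and> (\<forall>C\<in>CF. \<forall>D\<in>CF. C \<subseteq> D \<longleftrightarrow> Q (s D) \<subseteq> Q (s C))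
    \<and> (\<forall>C\<in>CF. \<forall>D\<in>CF.
         ((C \<subseteq> D \<and> adim C + 1 = adim D)
            \<longleftrightarrow> (\<exists>l\<in>nodes d m. s C l = 0 \<and> s D l \<in> {-1, 1}
                   \<and> (\<forall>l'\<in>nodes d m. l' \<noteq> l \<longrightarrow> s D l' = s C l')))
       \<and> ((C \<subseteq> D \<and> adim C + 1 = adim D)
            \<longleftrightarrow> (Q (s D) \<subseteq> Q (s C)
                   \<and> cube_dim (nodes d m) (s D) + 1 = cube_dim (nodes d m) (s C))))"
proof -
  define N where "N = nodes d m"
  define xs where "xs E = (SOME x. x \<in> rel_interior E)" for E :: "(nat \<Rightarrow> real) set"
  define pat where "pat E = vpat W b d 1 (m + 1) (xs E)" for E
  have NN: "N = nds d 1 (m + 1)" by (simp add: N_def nodes_nds)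
  have finN: "finite N" using finite_nds by (simp add: NN)
  have sE: "s E = (\<lambda>l. real_of_int (pat E l))" for E
    by (simp add: s_def signseq_eq pat_def xs_def)
  have PE: "Pc W b d (pat E) 1 (m + 1) = E" if "E \<in> CF" for E
    using cell_facts(4)[of E W b d m] that by (simp add: CF_def pat_def xs_def)
  have xE: "xs E \<in> E" if "E \<in> CF" for E
    using cell_facts(2)[of E W b d m] that by (simp add: CF_def xs_def)
  have okP: "okpat d 1 (m + 1) (pat E)" for E by (simp add: pat_def okpat_vpat)
  have prange: "pat E l \<in> {-1, 0, 1}" for E l
    by (cases "l \<in> nds d 1 (m + 1)") (auto simp: pat_def vpat_nds vpat_out sgi_def)
  have psgi: "pat E l = sgi (anode W b d 1 l (xs E))" if "l \<in> N" for E l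
    using that by (simp add: NN pat_def vpat_nds)
  have refine: "C \<subseteq> D \<longleftrightarrow> (\<forall>l\<in>N. pat C l \<noteq> 0 \<longrightarrow> pat D l = pat C l)"
    if C: "C \<in> CF" and D: "D \<in> CF" for C D
  proof
    assume CD: "C \<subseteq> D"
    show "\<forall>l\<in>N. pat C l \<noteq> 0 \<longrightarrow> pat D l = pat C l"
    proof (intro ballI impI)
      fix l assume l: "l \<in> N" and ne: "pat C l \<noteq> 0"
      have "xs C \<in> Pc W b d (pat D) 1 (m + 1)" using xE[OF C] CD PE[OF D] by blast
      then have "wk (pat D l) (anode W b d 1 l (xs C))" using l by (simp add: Pc_nds NN)
      then show "pat D l = pat C l" using wk_sgi_eq[OF prange] ne psgi[OF l] by metis
    qed
  next
    assume H: "\<forall>l\<in>N. pat C l \<noteq> 0 \<longrightarrow> pat D l = pat C l"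
    show "C \<subseteq> D"
    proof
      fix y assume "y \<in> C"
      then have y: "y \<in> Pc W b d (pat C) 1 (m + 1)" using PE[OF C] by simp
      have "wk (pat D l) (anode W b d 1 l y)" if l: "l \<in> nds d 1 (m + 1)" for l
      proof (cases "pat C l = 0")
        case True
        then have "anode W b d 1 l y = 0" using y l by (simp add: Pc_nds wk_def)
        then show ?thesis by simp
      next
        case False
        then show ?thesis using H l y by (simp add: Pc_nds NN)
      qed
      then have "y \<in> Pc W b d (pat D) 1 (m + 1)" using y by (simp add: Pc_nds)
      then show "y \<in> D" using PE[OF D] by simp
    qed
  qed
  have cube: "Q (s D) \<subseteq> Q (s C) \<longleftrightarrow> (\<forall>l\<in>N. pat C l \<noteq> 0 \<longrightarrow> pat D l = pat C l)" for C D
  proof -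
    have "\<forall>l\<in>N. s D l \<in> {-1, 0, 1}"
    proof
      fix l
      have "pat D l = -1 \<or> pat D l = 0 \<or> pat D l = 1" using prange[of D l] by simp
      then show "s D l \<in> {-1, 0, 1}" by (auto simp: sE)
    qed
    then have "Q (s D) \<subseteq> Q (s C) \<longleftrightarrow> (\<forall>l\<in>N. s C l \<noteq> 0 \<longrightarrow> s D l = s C l)"
      unfolding Q_def N_def by (rule cube_sub)
    then show ?thesis by (simp add: sE)
  qed
  have part2: "\<forall>C\<in>CF. \<forall>D\<in>CF. C \<subseteq> D \<longleftrightarrow> Q (s D) \<subseteq> Q (s C)"
    using refine cube by blast
  have part1: "bij_betw (\<lambda>C. Q (s C)) CF ((\<lambda>C. Q (s C)) ` CF)"
  proof (rule bij_betw_imageI)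
    show "inj_on (\<lambda>C. Q (s C)) CF"
    proof (rule inj_onI)
      fix C D assume "C \<in> CF" "D \<in> CF" "Q (s C) = Q (s D)"
      then show "C = D" using part2 by blast
    qed
  qed simp
  define Z where "Z E = {l \<in> N. pat E l = 0}" for E
  have dimE: "adim E + card (Z E) = d 0" if "E \<in> CF" for E
  proof -
    have "Zs W b d 1 (m + 1) (xs E) = Z E" by (simp add: Zs_def Z_def NN pat_def)
    then show ?thesis using cell_dim[OF gen st, of E] that by (simp add: CF_def xs_def)
  qed
  have cd: "cube_dim (nodes d m) (s E) = card (Z E)" for E
    by (simp add: cube_dim_def sE Z_def N_def)
  have finZ: "finite (Z E)" for E using finN by (simp add: Z_def)
  have part3: "((C \<subseteq> D \<and> adim C + 1 = adim D)
            \<longleftrightarrow> (\<exists>l\<in>nodes d m. s C l = 0 \<and> s D l \<in> {-1, 1}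
                   \<and> (\<forall>l'\<in>nodes d m. l' \<noteq> l \<longrightarrow> s D l' = s C l')))
       \<and> ((C \<subseteq> D \<and> adim C + 1 = adim D)
            \<longleftrightarrow> (Q (s D) \<subseteq> Q (s C)
                   \<and> cube_dim (nodes d m) (s D) + 1 = cube_dim (nodes d m) (s C)))"
    if C: "C \<in> CF" and D: "D \<in> CF" for C D
  proof -
    have dimeq: "adim C + 1 = adim D \<longleftrightarrow> card (Z D) + 1 = card (Z C)"
      using dimE[OF C] dimE[OF D] by linarith
    have A: "(C \<subseteq> D \<and> adim C + 1 = adim D) \<longleftrightarrow>
        (\<exists>l\<in>N. pat C l = 0 \<and> pat D l \<noteq> 0 \<and> (\<forall>l'\<in>N. l' \<noteq> l \<longrightarrow> pat D l' = pat C l'))"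
    proof
      assume H: "C \<subseteq> D \<and> adim C + 1 = adim D"
      then have R: "\<forall>l\<in>N. pat C l \<noteq> 0 \<longrightarrow> pat D l = pat C l" using refine[OF C D] by blast
      have sub: "Z D \<subseteq> Z C" using R by (auto simp: Z_def)
      have cardeq: "card (Z D) + 1 = card (Z C)" using H dimeq by blast
      have "card (Z C - Z D) = 1" using card_Diff_subset[OF finZ sub] cardeq by simp
      then obtain l where l: "Z C - Z D = {l}" by (auto simp: card_Suc_eq)
      show "\<exists>l\<in>N. pat C l = 0 \<and> pat D l \<noteq> 0 \<and> (\<forall>l'\<in>N. l' \<noteq> l \<longrightarrow> pat D l' = pat C l')"
      proof (intro bexI conjI ballI impI)
        show "l \<in> N" "pat C l = 0" "pat D l \<noteq> 0" using l by (auto simp: Z_def)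
        fix l' assume l': "l' \<in> N" "l' \<noteq> l"
        show "pat D l' = pat C l'"
        proof (cases "pat C l' = 0")
          case True
          then have "l' \<in> Z C" using l' by (simp add: Z_def)
          then have "l' \<in> Z D" using l l' by blast
          then show ?thesis using True by (simp add: Z_def)
        next
          case False
          then show ?thesis using R l' by blast
        qed
      qed
    next
      assume "\<exists>l\<in>N. pat C l = 0 \<and> pat D l \<noteq> 0 \<and> (\<forall>l'\<in>N. l' \<noteq> l \<longrightarrow> pat D l' = pat C l')"
      then obtain l where l: "l \<in> N" "pat C l = 0" "pat D l \<noteq> 0"
        and oth: "\<forall>l'\<in>N. l' \<noteq> l \<longrightarrow> pat D l' = pat C l'" by blast
      have R: "\<forall>l\<in>N. pat C l \<noteq> 0 \<longrightarrow> pat D l = pat C l" using oth l(2) by metis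
      then have CD: "C \<subseteq> D" using refine[OF C D] by blast
      have "Z C = insert l (Z D)"
      proof (intro set_eqI iffI)
        fix l' assume "l' \<in> Z C"
        then show "l' \<in> insert l (Z D)" using oth by (cases "l' = l") (auto simp: Z_def)
      next
        fix l' assume "l' \<in> insert l (Z D)"
        then show "l' \<in> Z C" using l R by (auto simp: Z_def)
      qed
      moreover have "l \<notin> Z D" using l by (simp add: Z_def)
      ultimately have "card (Z C) = card (Z D) + 1" using finZ by simp
      then show "C \<subseteq> D \<and> adim C + 1 = adim D" using CD dimeq by simp
    qed
    have B: "(\<exists>l\<in>N. pat C l = 0 \<and> pat D l \<noteq> 0 \<and> (\<forall>l'\<in>N. l' \<noteq> l \<longrightarrow> pat D l' = pat C l'))
        \<longleftrightarrow> (\<exists>l\<in>nodes d m. s C l = 0 \<and> s D l \<in> {-1, 1}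
                   \<and> (\<forall>l'\<in>nodes d m. l' \<noteq> l \<longrightarrow> s D l' = s C l'))"
    proof -
      have "pat D l \<noteq> 0 \<longleftrightarrow> real_of_int (pat D l) \<in> {-1, 1}" for l
      proof -
        have "pat D l = -1 \<or> pat D l = 0 \<or> pat D l = 1" using prange[of D l] by simp
        then show ?thesis by auto
      qed
      then show ?thesis by (simp add: sE N_def)
    qed
    have Cc: "(C \<subseteq> D \<and> adim C + 1 = adim D) \<longleftrightarrow> (Q (s D) \<subseteq> Q (s C)
                   \<and> cube_dim (nodes d m) (s D) + 1 = cube_dim (nodes d m) (s C))"
      using refine[OF C D] cube[of D C] dimeq cd by simp
    show ?thesis using A B Cc by simp
  qed
  show ?thesis using part1 part2 part3 by blast
qed

end
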